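(* For every integer $n\ge 1$, the number of parking graphs on the vertex set $[n]=\{1,\dots,n\}$ is exactly $(n+1)^{n-1}$.
   Context: A mixed graph may contain both undirected and directed edges. A parking graph $P$ on $[n]$ is a mixed graph with vertex set $[n]$ in which every pair $\{j,k\}$ with $1\le j<k\le n$ is joined by exactly one edge, which is of exactly one of three types: a down edge $j\leftarrow k$ (directed from $k$ to $j$), an up edge $j\rightarrow k$ (directed from $j$ to $k$), or a downish edge $jk$ (undirected). Let $\vec P$ be the directed graph (a tournament on $[n]$) obtained from $P$ by keeping all directed edges and replacing every downish edge $jk$ ($j<k$) by the directed edge $j\leftarrow k$. $P$ must satisfy the source-sink condition: (i) $\vec P$ is acyclic (contains no directed cycle), and (ii) for every triangle (set of three vertices) of $P$ among whose three edges there is at least one down edge and at least one downish edge, the source (vertex of in-degree $0$ within the triangle in $\vec P$) and the sink (vertex of out-degree $0$ within the triangle in $\vec P$) are not joined by a downish edge in $P$. *)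

theory Defs
  imports Main
begin

datatype etype = Down | Up | Downish

text \<open>A mixed graph on [n] with exactly one edge per pair {j,k}, j<k, is encoded by a
function P with P j k the type of the edge between j and k (for 1 \<le> j < k \<le> n).
Down: j \<leftarrow> k, Up: j \<rightarrow> k, Downish: undirected jk.
Values outside the domain are fixed to Down so that graphs correspond bijectively to functions.\<close>

definition edge_assignments :: "nat \<Rightarrow> (nat \<Rightarrow> nat \<Rightarrow> etype) set" where
  "edge_assignments n = {P. \<forall>j k. \<not> (1 \<le> j \<and> j < k \<and> k \<le> n) \<longrightarrow> P j k = Down}"

definition etp :: "(nat \<Rightarrow> nat \<Rightarrow> etype) \<Rightarrow> nat \<Rightarrow> nat \<Rightarrow> etype" where
  "etp P x y = (if x < y then P x y else P y x)"

text \<open>Arc x \<rightarrow> y in the tournament \<vec>P (downish edges jk, j<k, become k \<rightarrow> j).\<close>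
definition arc :: "(nat \<Rightarrow> nat \<Rightarrow> etype) \<Rightarrow> nat \<Rightarrow> nat \<Rightarrow> bool" where
  "arc P x y = ((x < y \<and> P x y = Up) \<or> (y < x \<and> P y x \<noteq> Up))"

definition arc_rel :: "nat \<Rightarrow> (nat \<Rightarrow> nat \<Rightarrow> etype) \<Rightarrow> nat rel" where
  "arc_rel n P = {(x, y). x \<in> {1..n} \<and> y \<in> {1..n} \<and> x \<noteq> y \<and> arc P x y}"

text \<open>Source-sink condition. In an acyclic tournament each triangle {s,m,t} is transitive with
source s and sink t exactly when s \<rightarrow> m, m \<rightarrow> t, s \<rightarrow> t.\<close>
definition source_sink :: "nat \<Rightarrow> (nat \<Rightarrow> nat \<Rightarrow> etype) \<Rightarrow> bool" where
  "source_sink n P =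
    (acyclic (arc_rel n P) \<and>
     (\<forall>s\<in>{1..n}. \<forall>m\<in>{1..n}. \<forall>t\<in>{1..n}.
        s \<noteq> m \<and> m \<noteq> t \<and> s \<noteq> t \<and> arc P s m \<and> arc P m t \<and> arc P s t \<and>
        Down \<in> {etp P s m, etp P m t, etp P s t} \<and>
        Downish \<in> {etp P s m, etp P m t, etp P s t}
        \<longrightarrow> etp P s t \<noteq> Downish))"

definition parking_graphs :: "nat \<Rightarrow> (nat \<Rightarrow> nat \<Rightarrow> etype) set" where
  "parking_graphs n = {P \<in> edge_assignments n. source_sink n P}"

end

theory Submission
  imports Defs "HOL-Library.FuncSet"
begin

lemma arc_total: "x \<noteq> y \<Longrightarrow> arc P x y \<or> arc P y x"
  unfolding arc_def by (cases "x < y") auto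

lemma arc_asym: "arc P x y \<Longrightarrow> \<not> arc P y x"
  unfolding arc_def by auto

lemma arc_irrefl: "\<not> arc P x x"
  unfolding arc_def by auto

definition ea :: "nat set \<Rightarrow> (nat \<Rightarrow> nat \<Rightarrow> etype) set" where
  "ea V = {P. \<forall>j k. \<not> (j \<in> V \<and> k \<in> V \<and> j < k) \<longrightarrow> P j k = Down}"

definition tt :: "nat set \<Rightarrow> (nat \<Rightarrow> nat \<Rightarrow> etype) \<Rightarrow> bool" where
  "tt V P = (\<forall>x\<in>V. \<forall>y\<in>V. \<forall>z\<in>V. arc P x y \<and> arc P y z \<longrightarrow> arc P x z)"

definition tri :: "nat set \<Rightarrow> (nat \<Rightarrow> nat \<Rightarrow> etype) \<Rightarrow> bool" where
  "tri V P = (\<forall>s\<in>V. \<forall>m\<in>V. \<forall>t\<in>V. arc P s m \<and> arc P m t \<and> etp P s t = Downish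
       \<longrightarrow> etp P s m \<noteq> Down \<and> etp P m t \<noteq> Down)"

definition PG :: "nat set \<Rightarrow> (nat \<Rightarrow> nat \<Rightarrow> etype) set" where
  "PG V = {P \<in> ea V. tt V P \<and> tri V P}"

definition good :: "nat set \<Rightarrow> (nat \<Rightarrow> nat \<Rightarrow> etype) \<Rightarrow> nat \<Rightarrow> bool" where
  "good V P t = (\<forall>y\<in>V. t < y \<longrightarrow> P t y \<noteq> Down)"

definition rank :: "nat set \<Rightarrow> (nat \<Rightarrow> nat \<Rightarrow> etype) \<Rightarrow> nat \<Rightarrow> nat" where
  "rank V P x = card {y\<in>V. arc P y x}"

definition sel :: "nat set \<Rightarrow> (nat \<Rightarrow> nat \<Rightarrow> etype) \<Rightarrow> nat \<Rightarrow> nat" where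
  "sel V P i = (THE x. x \<in> V \<and> rank V P x = i)"

definition cut :: "nat set \<Rightarrow> (nat \<Rightarrow> nat \<Rightarrow> etype) \<Rightarrow> nat" where
  "cut V P = (LEAST i. i < card V \<longrightarrow> \<not> good V P (sel V P i))"

definition rhoG :: "nat set \<Rightarrow> (nat \<Rightarrow> nat \<Rightarrow> etype) \<Rightarrow> nat list" where
  "rhoG V P = map (sel V P) [0..<cut V P]"



lemma rank_less:
  assumes "finite V" "tt V P" "x \<in> V" "y \<in> V" "arc P x y"
  shows "rank V P x < rank V P y"
proof -
  have sub: "{z\<in>V. arc P z x} \<subseteq> {z\<in>V. arc P z y}"
  proof
    fix z assume z: "z \<in> {z\<in>V. arc P z x}"
    then have "z \<in> V" "arc P z x" by auto
    then have "arc P z y" using assms(2,3,4,5) unfolding tt_def by blast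
    then show "z \<in> {z\<in>V. arc P z y}" using \<open>z \<in> V\<close> by auto
  qed
  have "x \<in> {z\<in>V. arc P z y}" "x \<notin> {z\<in>V. arc P z x}" using assms(3,5) arc_irrefl by auto
  then have ps: "{z\<in>V. arc P z x} \<subset> {z\<in>V. arc P z y}" using sub by blast
  have fin: "finite {z\<in>V. arc P z y}" using assms(1) by simp
  show ?thesis unfolding rank_def using psubset_card_mono[OF fin ps] .
qed


lemma rank_lt_card:
  assumes "finite V" "x \<in> V"
  shows "rank V P x < card V"
proof -
  have "{z\<in>V. arc P z x} \<subset> V" using assms(2) arc_irrefl by blast
  then show ?thesis unfolding rank_def using psubset_card_mono[OF assms(1)] by blast
qed

lemma arc_iff_rank:
  assumes "finite V" "tt V P" "x \<in> V" "y \<in> V"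
  shows "arc P x y \<longleftrightarrow> rank V P x < rank V P y"
proof
  assume "arc P x y" then show "rank V P x < rank V P y" using rank_less[OF assms] by blast
next
  assume h: "rank V P x < rank V P y"
  then have "x \<noteq> y" by auto
  then have "arc P x y \<or> arc P y x" by (rule arc_total)
  moreover have "\<not> arc P y x"
  proof
    assume "arc P y x"
    then have "rank V P y < rank V P x" using rank_less[OF assms(1,2,4,3)] by blast
    then show False using h by simp
  qed
  ultimately show "arc P x y" by blast
qed

lemma rank_inj:
  assumes "finite V" "tt V P"
  shows "inj_on (rank V P) V"
proof (rule inj_onI)
  fix x y assume xy: "x \<in> V" "y \<in> V" "rank V P x = rank V P y"
  show "x = y"
  proof (rule ccontr)
    assume "x \<noteq> y"
    then have "arc P x y \<or> arc P y x" by (rule arc_total)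
    then show False
    proof
      assume "arc P x y" then show False using rank_less[OF assms xy(1,2)] xy(3) by simp
    next
      assume "arc P y x" then show False using rank_less[OF assms xy(2,1)] xy(3) by simp
    qed
  qed
qed

lemma rank_image:
  assumes "finite V" "tt V P"
  shows "rank V P ` V = {..<card V}"
proof (rule card_seteq)
  show "finite {..<card V}" by simp
  show "rank V P ` V \<subseteq> {..<card V}" using rank_lt_card[OF assms(1)] by blast
  have "card (rank V P ` V) = card V" using card_image[OF rank_inj[OF assms]] .
  then show "card {..<card V} \<le> card (rank V P ` V)" by simp
qed

lemma sel_props:
  assumes "finite V" "tt V P" "i < card V"
  shows "sel V P i \<in> V" "rank V P (sel V P i) = i"
proof -
  have "i \<in> rank V P ` V" using rank_image[OF assms(1,2)] assms(3) by simp
  then obtain x where x: "x \<in> V" "rank V P x = i" by blast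
  have u: "\<And>y. y \<in> V \<and> rank V P y = i \<Longrightarrow> y = x"
  proof -
    fix y assume "y \<in> V \<and> rank V P y = i"
    then show "y = x" using inj_onD[OF rank_inj[OF assms(1,2)]] x by metis
  qed
  have "sel V P i = x" unfolding sel_def using x u by (intro the_equality) blast+
  then show "sel V P i \<in> V" "rank V P (sel V P i) = i" using x by simp_all
qed

lemma sel_rank:
  assumes "finite V" "tt V P" "x \<in> V"
  shows "sel V P (rank V P x) = x"
proof -
  have r: "rank V P x < card V" using rank_lt_card assms(1,3) by blast
  have a: "sel V P (rank V P x) \<in> V" "rank V P (sel V P (rank V P x)) = rank V P x"
    using sel_props[OF assms(1,2) r] by simp_all
  show ?thesis using inj_onD[OF rank_inj[OF assms(1,2)] a(2) a(1) assms(3)] .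
qed


definition restr :: "nat \<Rightarrow> (nat \<Rightarrow> nat \<Rightarrow> etype) \<Rightarrow> (nat \<Rightarrow> nat \<Rightarrow> etype)" where
  "restr u P = (\<lambda>j k. if j = u \<or> k = u then Down else P j k)"

definition extP :: "nat \<Rightarrow> nat set \<Rightarrow> nat set \<Rightarrow> (nat \<Rightarrow> nat \<Rightarrow> etype) \<Rightarrow> (nat \<Rightarrow> nat \<Rightarrow> etype)" where
  "extP u A V' P' = (\<lambda>j k. if k = u \<and> j \<in> V' \<and> j < u then (if j \<in> A then Downish else Down)
       else if j = u \<and> k \<in> V' \<and> u < k then Up else P' j k)"

lemma arc_restr: "x \<noteq> u \<Longrightarrow> y \<noteq> u \<Longrightarrow> arc (restr u P) x y = arc P x y"
  unfolding arc_def restr_def by auto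

lemma etp_restr: "x \<noteq> u \<Longrightarrow> y \<noteq> u \<Longrightarrow> etp (restr u P) x y = etp P x y"
  unfolding etp_def restr_def by auto

lemma arc_ext: "x \<noteq> u \<Longrightarrow> y \<noteq> u \<Longrightarrow> arc (extP u A V' P') x y = arc P' x y"
  unfolding arc_def extP_def by auto

lemma etp_ext: "x \<noteq> u \<Longrightarrow> y \<noteq> u \<Longrightarrow> etp (extP u A V' P') x y = etp P' x y"
  unfolding etp_def extP_def by auto

lemma arc_ext_u: "y \<in> V' \<Longrightarrow> y \<noteq> u \<Longrightarrow> arc (extP u A V' P') u y"
  unfolding arc_def extP_def by (cases "y < u") auto

lemma not_arc_ext_u: "y \<in> V' \<Longrightarrow> y \<noteq> u \<Longrightarrow> \<not> arc (extP u A V' P') y u"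
  using arc_ext_u arc_asym by blast

lemma etp_ext_u: "t \<in> V' \<Longrightarrow> t \<noteq> u \<Longrightarrow>
   etp (extP u A V' P') u t = (if t < u then (if t \<in> A then Downish else Down) else Up)"
  unfolding etp_def extP_def by auto

lemma ea_ext:
  assumes "P' \<in> ea V'" "u \<notin> V'"
  shows "extP u A V' P' \<in> ea (insert u V')"
  using assms unfolding ea_def extP_def by auto

lemma restr_ext:
  assumes "P' \<in> ea V'" "u \<notin> V'"
  shows "restr u (extP u A V' P') = P'"
proof (intro ext)
  fix j k
  show "restr u (extP u A V' P') j k = P' j k"
    using assms unfolding ea_def extP_def restr_def by auto
qed

lemma ea_restr:
  assumes "P \<in> ea V"
  shows "restr u P \<in> ea (V - {u})"
  using assms unfolding ea_def restr_def by auto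

lemma ext_restr:
  assumes "P \<in> ea V" "u \<in> V" "\<forall>y\<in>V. y \<noteq> u \<longrightarrow> arc P u y"
  shows "extP u {j\<in>V-{u}. j < u \<and> P j u = Downish} (V-{u}) (restr u P) = P"
proof (intro ext)
  fix j k
  show "extP u {j\<in>V-{u}. j < u \<and> P j u = Downish} (V-{u}) (restr u P) j k = P j k"
  proof (cases "k = u \<and> j \<in> V - {u} \<and> j < u")
    case True
    then have "arc P u j" using assms(3) by auto
    then have "P j u \<noteq> Up" using True unfolding arc_def by auto
    then show ?thesis using True unfolding extP_def by (cases "P j u") auto
  next
    case F1: False
    show ?thesis
    proof (cases "j = u \<and> k \<in> V - {u} \<and> u < k")
      case True
      then have "arc P u k" using assms(3) by auto
      then have "P u k = Up" using True unfolding arc_def by auto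
      then show ?thesis using True unfolding extP_def by auto
    next
      case False
      then show ?thesis using F1 assms(1,2) unfolding extP_def restr_def ea_def by auto
    qed
  qed
qed

lemma tt_restr:
  assumes "tt V P"
  shows "tt (V - {u}) (restr u P)"
  using assms unfolding tt_def by (simp add: arc_restr) blast

lemma tri_restr:
  assumes "tri V P"
  shows "tri (V - {u}) (restr u P)"
  using assms unfolding tri_def by (simp add: arc_restr etp_restr) blast

lemma PG_restr:
  assumes "P \<in> PG V"
  shows "restr u P \<in> PG (V - {u})"
  using assms unfolding PG_def by (auto intro: ea_restr tt_restr tri_restr)

lemma tt_ext:
  assumes "tt V' P'" "u \<notin> V'"
  shows "tt (insert u V') (extP u A V' P')"
  unfolding tt_def
proof (intro ballI impI)
  fix x y z assume xyz: "x \<in> insert u V'" "y \<in> insert u V'" "z \<in> insert u V'"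
    and a: "arc (extP u A V' P') x y \<and> arc (extP u A V' P') y z"
  have yu: "y \<noteq> u" using a xyz not_arc_ext_u[of x V' u] arc_irrefl assms(2) by blast
  have zu: "z \<noteq> u" using a xyz not_arc_ext_u[of y V' u] arc_irrefl assms(2) by blast
  show "arc (extP u A V' P') x z"
  proof (cases "x = u")
    case True then show ?thesis using zu xyz arc_ext_u by blast
  next
    case False
    then have "arc P' x y" "arc P' y z" using a yu zu arc_ext by blast+
    then have "arc P' x z" using assms(1) xyz False yu zu unfolding tt_def by blast
    then show ?thesis using False zu arc_ext by blast
  qed
qed


definition validA :: "nat \<Rightarrow> nat set \<Rightarrow> (nat \<Rightarrow> nat \<Rightarrow> etype) \<Rightarrow> nat set \<Rightarrow> bool" where
  "validA u V' P' A = (\<forall>t\<in>A. good V' P' t \<and> (\<forall>m\<in>V'. m < u \<and> arc P' m t \<longrightarrow> m \<in> A))"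

lemma good_arc:
  assumes "good V P t" "m \<in> V" "arc P m t"
  shows "etp P m t \<noteq> Down"
proof -
  have "m \<noteq> t" using assms(3) arc_irrefl by blast
  show ?thesis
  proof (cases "m < t")
    case True then show ?thesis using assms(3) unfolding etp_def arc_def by auto
  next
    case False
    then have "t < m" using \<open>m \<noteq> t\<close> by simp
    then show ?thesis using assms(1,2) unfolding etp_def good_def by auto
  qed
qed

lemma tri_ext_iff:
  assumes "tri V' P'" "u \<notin> V'" "A \<subseteq> {x\<in>V'. x < u}"
  shows "tri (insert u V') (extP u A V' P') \<longleftrightarrow> validA u V' P' A"
proof
  let ?Q = "extP u A V' P'"
  assume T: "tri (insert u V') ?Q"
  show "validA u V' P' A" unfolding validA_def
  proof (rule ballI, rule conjI)
    fix t assume tA: "t \<in> A"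
    then have tV: "t \<in> V'" "t < u" using assms(3) by auto
    then have tu: "t \<noteq> u" by simp
    have et: "etp ?Q u t = Downish" using etp_ext_u[OF tV(1) tu] tA tV by simp
    show "good V' P' t" unfolding good_def
    proof (intro ballI impI)
      fix y assume yV: "y \<in> V'" and ty: "t < y"
      have yu: "y \<noteq> u" using yV assms(2) by blast
      show "P' t y \<noteq> Down"
      proof
        assume D: "P' t y = Down"
        then have "arc P' y t" using ty unfolding arc_def by auto
        then have a1: "arc ?Q y t" using arc_ext[OF yu tu] by simp
        have a2: "arc ?Q u y" using arc_ext_u[OF yV yu] .
        have "etp ?Q y t \<noteq> Down"
          using T[unfolded tri_def, rule_format, of u y t] a1 a2 et yV tV by simp
        moreover have "etp ?Q y t = Down" using etp_ext[OF yu tu] D ty unfolding etp_def by simp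
        ultimately show False by simp
      qed
    qed
    show "\<forall>m\<in>V'. m < u \<and> arc P' m t \<longrightarrow> m \<in> A"
    proof (intro ballI impI)
      fix m assume mV: "m \<in> V'" and h: "m < u \<and> arc P' m t"
      have mu: "m \<noteq> u" using h by simp
      have a1: "arc ?Q m t" using arc_ext[OF mu tu] h by simp
      have a2: "arc ?Q u m" using arc_ext_u[OF mV mu] .
      have "etp ?Q u m \<noteq> Down"
        using T[unfolded tri_def, rule_format, of u m t] a1 a2 et mV tV by simp
      then show "m \<in> A" using etp_ext_u[OF mV mu] h by (auto split: if_splits)
    qed
  qed
next
  let ?Q = "extP u A V' P'"
  assume VA: "validA u V' P' A"
  show "tri (insert u V') ?Q" unfolding tri_def
  proof (intro ballI impI)
    fix s m t assume sV: "s \<in> insert u V'" and mV: "m \<in> insert u V'" and tV: "t \<in> insert u V'"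
      and h: "arc ?Q s m \<and> arc ?Q m t \<and> etp ?Q s t = Downish"
    have mu: "m \<noteq> u"
    proof
      assume "m = u"
      then have "arc ?Q s u" using h by simp
      moreover have "s \<noteq> u" using \<open>arc ?Q s u\<close> arc_irrefl by metis
      ultimately show False using sV not_arc_ext_u[of s V' u A P'] by simp
    qed
    have tu: "t \<noteq> u"
    proof
      assume "t = u"
      then have "arc ?Q m u" using h by simp
      then show False using mV mu not_arc_ext_u[of m V' u A P'] by simp
    qed
    have mV': "m \<in> V'" "t \<in> V'" using mV tV mu tu by auto
    have amt: "arc P' m t" using h arc_ext[OF mu tu] by simp
    have emt: "etp ?Q m t = etp P' m t" using etp_ext[OF mu tu] .
    show "etp ?Q s m \<noteq> Down \<and> etp ?Q m t \<noteq> Down"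
    proof (cases "s = u")
      case True
      have "etp ?Q u t = Downish" using h True by simp
      then have tA: "t \<in> A" "t < u" using etp_ext_u[OF mV'(2) tu] by (auto split: if_splits)
      have gt: "good V' P' t" and cl: "\<forall>m\<in>V'. m < u \<and> arc P' m t \<longrightarrow> m \<in> A"
        using VA tA unfolding validA_def by auto
      have "etp ?Q u m \<noteq> Down"
        using etp_ext_u[OF mV'(1) mu] cl mV'(1) amt by auto
      moreover have "etp P' m t \<noteq> Down" using good_arc[OF gt mV'(1) amt] .
      ultimately show ?thesis using True emt by simp
    next
      case False
      then have sV': "s \<in> V'" using sV by simp
      have asm: "arc P' s m" using h arc_ext[OF False mu] by simp
      have est: "etp P' s t = Downish" using h etp_ext[OF False tu] by simp
      have "etp P' s m \<noteq> Down \<and> etp P' m t \<noteq> Down"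
        using assms(1)[unfolded tri_def, rule_format, of s m t] sV' mV' asm amt est by simp
      then show ?thesis using etp_ext[OF False mu] emt by simp
    qed
  qed
qed

lemma good_ext:
  assumes "x \<in> V'" "u \<notin> V'"
  shows "good (insert u V') (extP u A V' P') x \<longleftrightarrow> good V' P' x \<and> (x < u \<longrightarrow> x \<in> A)"
proof -
  have xu: "x \<noteq> u" using assms by blast
  have 1: "\<And>y. y \<in> V' \<Longrightarrow> extP u A V' P' x y = P' x y" using xu assms(2) unfolding extP_def by auto
  have 2: "x < u \<Longrightarrow> extP u A V' P' x u = (if x \<in> A then Downish else Down)"
    using assms unfolding extP_def by auto
  have e: "good (insert u V') (extP u A V' P') x = ((x < u \<longrightarrow> extP u A V' P' x u \<noteq> Down) \<and>
     (\<forall>y\<in>V'. x < y \<longrightarrow> extP u A V' P' x y \<noteq> Down))" unfolding good_def by simp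
  have e2: "(\<forall>y\<in>V'. x < y \<longrightarrow> extP u A V' P' x y \<noteq> Down) = good V' P' x"
    unfolding good_def using 1 by simp
  have e3: "(x < u \<longrightarrow> extP u A V' P' x u \<noteq> Down) = (x < u \<longrightarrow> x \<in> A)" using 2 by auto
  show ?thesis using e e2 e3 by blast
qed

lemma good_ext_u:
  assumes "u \<notin> V'"
  shows "good (insert u V') (extP u A V' P') u"
  using assms unfolding good_def extP_def by auto

lemma rank_ext:
  assumes "finite V'" "u \<notin> V'" "x \<in> V'"
  shows "rank (insert u V') (extP u A V' P') x = Suc (rank V' P' x)"
proof -
  have xu: "x \<noteq> u" using assms by blast
  have "{y\<in>insert u V'. arc (extP u A V' P') y x} = insert u {y\<in>V'. arc P' y x}"
  proof -
    have 1: "\<And>y. y \<in> V' \<Longrightarrow> arc (extP u A V' P') y x = arc P' y x"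
    proof -
      fix y assume "y \<in> V'"
      then have "y \<noteq> u" using assms(2) by blast
      then show "arc (extP u A V' P') y x = arc P' y x" using arc_ext[OF _ xu] by blast
    qed
    have 2: "arc (extP u A V' P') u x" using arc_ext_u[OF assms(3) xu] .
    show ?thesis
    proof (rule set_eqI)
      fix y show "y \<in> {y\<in>insert u V'. arc (extP u A V' P') y x} \<longleftrightarrow> y \<in> insert u {y\<in>V'. arc P' y x}"
        using 1 2 by (cases "y = u") auto
    qed
  qed
  then show ?thesis unfolding rank_def using assms(1,2) by simp
qed

lemma rank_ext_u:
  assumes "u \<notin> V'"
  shows "rank (insert u V') (extP u A V' P') u = 0"
proof -
  have "\<And>y. y \<in> insert u V' \<Longrightarrow> \<not> arc (extP u A V' P') y u"
  proof -
    fix y assume y: "y \<in> insert u V'"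
    show "\<not> arc (extP u A V' P') y u"
    proof (cases "y = u")
      case True then show ?thesis using arc_irrefl by simp
    next
      case False then show ?thesis using y not_arc_ext_u[of y V' u A P'] by simp
    qed
  qed
  then have e: "{y\<in>insert u V'. arc (extP u A V' P') y u} = {}" by blast
  show ?thesis unfolding rank_def e by simp
qed

lemma cut_le: "cut V P \<le> card V"
  unfolding cut_def by (rule Least_le) simp

lemma cut_good:
  assumes "i < cut V P"
  shows "i < card V" "good V P (sel V P i)"
  using not_less_Least[OF assms[unfolded cut_def]] by auto

lemma cut_bad:
  assumes "cut V P < card V"
  shows "\<not> good V P (sel V P (cut V P))"
proof -
  have "cut V P < card V \<longrightarrow> \<not> good V P (sel V P (cut V P))"
    unfolding cut_def by (rule LeastI[of _ "card V"]) simp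
  then show ?thesis using assms by blast
qed


definition Aj :: "nat \<Rightarrow> nat set \<Rightarrow> (nat \<Rightarrow> nat \<Rightarrow> etype) \<Rightarrow> nat \<Rightarrow> nat set" where
  "Aj u V' P' j = {x\<in>V'. x < u \<and> rank V' P' x < j}"

lemma sel_ext0:
  assumes "finite V'" "tt V' P'" "u \<notin> V'"
  shows "sel (insert u V') (extP u A V' P') 0 = u"
proof -
  have "sel (insert u V') (extP u A V' P') (rank (insert u V') (extP u A V' P') u) = u"
    using sel_rank[of "insert u V'" "extP u A V' P'" u] tt_ext[OF assms(2,3)] assms(1) by simp
  then show ?thesis using rank_ext_u[OF assms(3)] by simp
qed

lemma sel_extS:
  assumes "finite V'" "tt V' P'" "u \<notin> V'" "i < card V'"
  shows "sel (insert u V') (extP u A V' P') (Suc i) = sel V' P' i"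
proof -
  have x: "sel V' P' i \<in> V'" "rank V' P' (sel V' P' i) = i" using sel_props[OF assms(1,2,4)] by auto
  have r: "rank (insert u V') (extP u A V' P') (sel V' P' i) = Suc i"
    using rank_ext[OF assms(1,3) x(1)] x(2) by simp
  have "sel (insert u V') (extP u A V' P') (rank (insert u V') (extP u A V' P') (sel V' P' i)) = sel V' P' i"
    using sel_rank[of "insert u V'" "extP u A V' P'" "sel V' P' i"] tt_ext[OF assms(2,3)] assms(1) x(1) by simp
  then show ?thesis using r by simp
qed

lemma cut_ext:
  assumes "finite V'" "tt V' P'" "u \<notin> V'" "j \<le> cut V' P'" "j = cut V' P' \<or> sel V' P' j < u"
  shows "cut (insert u V') (extP u (Aj u V' P' j) V' P') = Suc j"
  unfolding cut_def
proof (rule Least_equality)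
  let ?Q = "extP u (Aj u V' P' j) V' P'"
  have cV: "card (insert u V') = Suc (card V')" using assms(1,3) by simp
  show "Suc j < card (insert u V') \<longrightarrow> \<not> good (insert u V') ?Q (sel (insert u V') ?Q (Suc j))"
  proof
    assume "Suc j < card (insert u V')"
    then have jc: "j < card V'" using cV by simp
    have s: "sel (insert u V') ?Q (Suc j) = sel V' P' j" using sel_extS[OF assms(1,2,3) jc] .
    have x: "sel V' P' j \<in> V'" "rank V' P' (sel V' P' j) = j" using sel_props[OF assms(1,2) jc] by auto
    have nA: "sel V' P' j \<notin> Aj u V' P' j" using x unfolding Aj_def by simp
    have g: "good (insert u V') ?Q (sel V' P' j) \<longleftrightarrow> good V' P' (sel V' P' j) \<and> (sel V' P' j < u \<longrightarrow> sel V' P' j \<in> Aj u V' P' j)"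
      using good_ext[OF x(1) assms(3)] .
    show "\<not> good (insert u V') ?Q (sel (insert u V') ?Q (Suc j))"
    proof (cases "j = cut V' P'")
      case True
      then have "\<not> good V' P' (sel V' P' j)" using cut_bad[of V' P'] jc by simp
      then show ?thesis using s g by simp
    next
      case False
      then have "sel V' P' j < u" using assms(5) by simp
      then show ?thesis using s g nA by simp
    qed
  qed
  fix y assume H: "y < card (insert u V') \<longrightarrow> \<not> good (insert u V') ?Q (sel (insert u V') ?Q y)"
  show "Suc j \<le> y"
  proof (rule ccontr)
    assume "\<not> Suc j \<le> y"
    then have yj: "y \<le> j" by simp
    show False
    proof (cases y)
      case 0
      then show False using H sel_ext0[OF assms(1,2,3)] good_ext_u[OF assms(3)] cV by simp
    next
      case (Suc i)
      then have ij: "i < j" using yj by simp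
      then have ic: "i < cut V' P'" using assms(4) by simp
      then have ic2: "i < card V'" using cut_le[of V' P'] by simp
      have s: "sel (insert u V') ?Q (Suc i) = sel V' P' i" using sel_extS[OF assms(1,2,3) ic2] .
      have x: "sel V' P' i \<in> V'" "rank V' P' (sel V' P' i) = i" using sel_props[OF assms(1,2) ic2] by auto
      have "good V' P' (sel V' P' i)" using cut_good[OF ic] by simp
      moreover have "sel V' P' i \<in> Aj u V' P' j \<or> \<not> sel V' P' i < u" using x ij unfolding Aj_def by auto
      ultimately have "good (insert u V') ?Q (sel V' P' i)" using good_ext[OF x(1) assms(3)] by blast
      then show False using H s Suc ic2 cV by simp
    qed
  qed
qed

lemma rho_ext:
  assumes "finite V'" "tt V' P'" "u \<notin> V'" "j \<le> cut V' P'" "j = cut V' P' \<or> sel V' P' j < u"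
  shows "rhoG (insert u V') (extP u (Aj u V' P' j) V' P') = u # take j (rhoG V' P')"
proof -
  let ?Q = "extP u (Aj u V' P' j) V' P'"
  have jc: "j \<le> card V'" using assms(4) cut_le[of V' P'] by simp
  have "rhoG (insert u V') ?Q = map (sel (insert u V') ?Q) [0..<Suc j]"
    unfolding rhoG_def cut_ext[OF assms] ..
  also have "\<dots> = sel (insert u V') ?Q 0 # map (sel (insert u V') ?Q) (map Suc [0..<j])"
    by (simp add: upt_conv_Cons map_Suc_upt del: upt_Suc)
  also have "\<dots> = u # map (sel V' P') [0..<j]"
    using sel_ext0[OF assms(1,2,3)] sel_extS[OF assms(1,2,3)] jc by simp
  also have "\<dots> = u # take j (rhoG V' P')"
    unfolding rhoG_def using assms(4) by (simp add: take_map min_def)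
  finally show ?thesis .
qed

lemma validA_Aj:
  assumes "finite V'" "tt V' P'" "j \<le> cut V' P'"
  shows "validA u V' P' (Aj u V' P' j)"
  unfolding validA_def
proof (rule ballI, rule conjI)
  fix t assume t: "t \<in> Aj u V' P' j"
  then have tV: "t \<in> V'" "t < u" "rank V' P' t < j" unfolding Aj_def by auto
  have "rank V' P' t < cut V' P'" using tV(3) assms(3) by simp
  then have "good V' P' (sel V' P' (rank V' P' t))" using cut_good by blast
  then show "good V' P' t" using sel_rank[OF assms(1,2) tV(1)] by simp
  show "\<forall>m\<in>V'. m < u \<and> arc P' m t \<longrightarrow> m \<in> Aj u V' P' j"
  proof (intro ballI impI)
    fix m assume m: "m \<in> V'" "m < u \<and> arc P' m t"
    then have "rank V' P' m < rank V' P' t" using rank_less[OF assms(1,2) m(1) tV(1)] by simp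
    then show "m \<in> Aj u V' P' j" using m tV unfolding Aj_def by simp
  qed
qed

lemma Aj_sub: "Aj u V' P' j \<subseteq> {x\<in>V'. x < u}"
  unfolding Aj_def by auto


lemma etype_cases3: "(e::etype) \<noteq> Up \<Longrightarrow> e \<noteq> Down \<Longrightarrow> e = Downish"
  by (cases e) auto

lemma valid_is_Aj:
  assumes "finite V'" "tt V' P'" "tri V' P'" "A \<subseteq> {x\<in>V'. x < u}" "validA u V' P' A"
  shows "\<exists>j \<le> cut V' P'. (j = cut V' P' \<or> sel V' P' j < u) \<and> A = Aj u V' P' j"
proof -
  let ?c = "cut V' P'"
  let ?G = "Aj u V' P' ?c"
  have goodA: "\<And>t. t \<in> A \<Longrightarrow> good V' P' t" using assms(5) unfolding validA_def by blast
  have clA: "\<And>t m. t \<in> A \<Longrightarrow> m \<in> V' \<Longrightarrow> m < u \<Longrightarrow> arc P' m t \<Longrightarrow> m \<in> A"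
    using assms(5) unfolding validA_def by blast
  show ?thesis
  proof (cases "?G \<subseteq> A")
    case True
    have "A \<subseteq> ?G"
    proof
      fix t assume tA: "t \<in> A"
      then have tV: "t \<in> V'" "t < u" using assms(4) by auto
      have "rank V' P' t < ?c"
      proof (rule ccontr)
        assume "\<not> rank V' P' t < ?c"
        then have ct: "?c \<le> rank V' P' t" by simp
        have cc: "?c < card V'" using ct rank_lt_card[OF assms(1) tV(1), of P'] by simp
        define y where "y = sel V' P' ?c"
        have y: "y \<in> V'" "rank V' P' y = ?c" using sel_props[OF assms(1,2) cc] unfolding y_def by auto
        have ng: "\<not> good V' P' y" using cut_bad[OF cc] unfolding y_def .
        then obtain z where z: "z \<in> V'" "y < z" "P' y z = Down" unfolding good_def by blast
        have gt: "good V' P' t" using goodA[OF tA] .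
        have ty: "t \<noteq> y" using gt ng by blast
        have "rank V' P' y \<noteq> rank V' P' t"
          using ty inj_onD[OF rank_inj[OF assms(1,2)] _ y(1) tV(1)] by metis
        then have "rank V' P' y < rank V' P' t" using y(2) ct by simp
        then have ayt: "arc P' y t" using arc_iff_rank[OF assms(1,2) y(1) tV(1)] by simp
        have azy: "arc P' z y" using z(2,3) unfolding arc_def by simp
        have azt: "arc P' z t" using assms(2)[unfolded tt_def, rule_format, of z y t] z(1) y(1) tV(1) azy ayt by simp
        have zt: "z \<noteq> t" using azy ayt arc_asym by blast
        show False
        proof (cases "t < z")
          case True
          have "P' t z \<noteq> Up" using azt True unfolding arc_def by auto
          moreover have "P' t z \<noteq> Down" using gt z(1) True unfolding good_def by blast
          ultimately have "P' t z = Downish" by (rule etype_cases3)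
          then have "etp P' z t = Downish" using True unfolding etp_def by simp
          then have "etp P' z y \<noteq> Down"
            using assms(3)[unfolded tri_def, rule_format, of z y t] z(1) y(1) tV(1) azy ayt by simp
          moreover have "etp P' z y = Down" using z(2,3) unfolding etp_def by simp
          ultimately show False by simp
        next
          case False
          then have "y < u" using z(2) zt tV(2) by simp
          then have "y \<in> A" using clA[OF tA y(1) _ ayt] by simp
          then show False using goodA ng by blast
        qed
      qed
      then show "t \<in> ?G" using tV unfolding Aj_def by simp
    qed
    then have "A = ?G" using True by blast
    then show ?thesis by auto
  next
    case False
    then obtain x0 where x0: "x0 \<in> ?G" "x0 \<notin> A" by blast
    define j where "j = (LEAST i. \<exists>x\<in>?G - A. rank V' P' x = i)"
    have ex: "\<exists>x\<in>?G - A. rank V' P' x = rank V' P' x0" using x0 by blast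
    have "\<exists>x\<in>?G - A. rank V' P' x = j" unfolding j_def by (rule LeastI_ex) (use ex in blast)
    then obtain x where x: "x \<in> ?G" "x \<notin> A" "rank V' P' x = j" by blast
    have xV: "x \<in> V'" "x < u" "j < ?c" using x unfolding Aj_def by auto
    have selj: "sel V' P' j = x" using sel_rank[OF assms(1,2) xV(1)] x(3) by simp
    have minj: "\<And>y. y \<in> ?G \<Longrightarrow> y \<notin> A \<Longrightarrow> j \<le> rank V' P' y"
      unfolding j_def by (rule Least_le) blast
    have "A = Aj u V' P' j"
    proof
      show "A \<subseteq> Aj u V' P' j"
      proof
        fix t assume tA: "t \<in> A"
        then have tV: "t \<in> V'" "t < u" using assms(4) by auto
        have "rank V' P' t < j"
        proof (rule ccontr)
          assume "\<not> rank V' P' t < j"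
          moreover have "t \<noteq> x" using tA x(2) by blast
          then have "rank V' P' t \<noteq> rank V' P' x"
            using inj_onD[OF rank_inj[OF assms(1,2)] _ tV(1) xV(1)] by metis
          ultimately have "rank V' P' x < rank V' P' t" using x(3) by simp
          then have "arc P' x t" using arc_iff_rank[OF assms(1,2) xV(1) tV(1)] by simp
          then have "x \<in> A" using clA[OF tA xV(1) xV(2)] by simp
          then show False using x(2) by simp
        qed
        then show "t \<in> Aj u V' P' j" using tV unfolding Aj_def by simp
      qed
      show "Aj u V' P' j \<subseteq> A"
      proof
        fix t assume t: "t \<in> Aj u V' P' j"
        then have tV: "t \<in> V'" "t < u" "rank V' P' t < j" unfolding Aj_def by auto
        then have "t \<in> ?G" using xV(3) unfolding Aj_def by simp
        show "t \<in> A"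
        proof (rule ccontr)
          assume "t \<notin> A"
          then have "j \<le> rank V' P' t" using minj[OF \<open>t \<in> ?G\<close>] by simp
          then show False using tV(3) by simp
        qed
      qed
    qed
    then show ?thesis using xV(3) selj xV(2) by (intro exI[of _ j]) simp
  qed
qed


definition Sset :: "nat \<Rightarrow> nat list \<Rightarrow> nat list set" where
  "Sset u \<tau> = {\<sigma>. take (length \<tau>) \<sigma> = \<tau> \<and> length \<tau> \<le> length \<sigma> \<and> (length \<tau> = length \<sigma> \<or> \<sigma> ! length \<tau> < u)}"

lemma rhoG_length: "length (rhoG V P) = cut V P"
  unfolding rhoG_def by simp

lemma rhoG_nth: "i < cut V P \<Longrightarrow> rhoG V P ! i = sel V P i"
  unfolding rhoG_def by simp

lemma PG_dec:
  assumes fin: "finite V" and PV: "P \<in> PG V" and rh: "rhoG V P = u # \<tau>"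
  shows "u \<in> V" "restr u P \<in> PG (V - {u})" "rhoG (V - {u}) (restr u P) \<in> Sset u \<tau>"
    "extP u (Aj u (V-{u}) (restr u P) (length \<tau>)) (V-{u}) (restr u P) = P"
proof -
  have ea: "P \<in> ea V" and tt: "tt V P" and tri: "tri V P" using PV unfolding PG_def by auto
  have c0: "0 < cut V P" using rh rhoG_length[of V P] by (cases "cut V P") auto
  have u0: "sel V P 0 = u" using rh rhoG_nth[OF c0] by simp
  have cV: "0 < card V" using c0 cut_le[of V P] by simp
  show uV: "u \<in> V" using sel_props[OF fin tt cV] u0 by simp
  have ru: "rank V P u = 0" using sel_props[OF fin tt cV] u0 by simp
  have src: "\<forall>y\<in>V. y \<noteq> u \<longrightarrow> arc P u y"
  proof (intro ballI impI)
    fix y assume y: "y \<in> V" "y \<noteq> u"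
    have "rank V P y \<noteq> rank V P u" using inj_onD[OF rank_inj[OF fin tt] _ y(1) uV] y(2) by metis
    then have "rank V P u < rank V P y" using ru by simp
    then show "arc P u y" using arc_iff_rank[OF fin tt uV y(1)] by simp
  qed
  define V' where "V' = V - {u}"
  define P' where "P' = restr u P"
  define A where "A = {j\<in>V'. j < u \<and> P j u = Downish}"
  have VV: "insert u V' = V" "u \<notin> V'" "finite V'" using uV fin unfolding V'_def by auto
  have eq: "extP u A V' P' = P" unfolding A_def P'_def V'_def using ext_restr[OF ea uV src] .
  show P'PG: "restr u P \<in> PG (V - {u})" using PG_restr[OF PV] .
  then have P'PG': "P' \<in> PG V'" unfolding P'_def V'_def .
  have tt': "tt V' P'" and tri': "tri V' P'" using P'PG' unfolding PG_def by auto
  have AL: "A \<subseteq> {x\<in>V'. x < u}" unfolding A_def by auto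
  have "tri (insert u V') (extP u A V' P')" using tri eq VV(1) by simp
  then have vA: "validA u V' P' A" using tri_ext_iff[OF tri' VV(2) AL] by simp
  obtain j where j: "j \<le> cut V' P'" "j = cut V' P' \<or> sel V' P' j < u" "A = Aj u V' P' j"
    using valid_is_Aj[OF VV(3) tt' tri' AL vA] by blast
  have "rhoG (insert u V') (extP u (Aj u V' P' j) V' P') = u # take j (rhoG V' P')"
    using rho_ext[OF VV(3) tt' VV(2) j(1,2)] .
  then have "u # \<tau> = u # take j (rhoG V' P')" using eq j(3) VV(1) rh by simp
  then have tau: "\<tau> = take j (rhoG V' P')" by simp
  then have lt: "length \<tau> = j" using j(1) rhoG_length[of V' P'] by simp
  have "rhoG V' P' \<in> Sset u \<tau>"
    unfolding Sset_def
  proof (intro CollectI conjI)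
    show "take (length \<tau>) (rhoG V' P') = \<tau>" using tau lt by simp
    show "length \<tau> \<le> length (rhoG V' P')" using lt j(1) rhoG_length[of V' P'] by simp
    show "length \<tau> = length (rhoG V' P') \<or> rhoG V' P' ! length \<tau> < u"
    proof (cases "j = cut V' P'")
      case True then show ?thesis using lt rhoG_length[of V' P'] by simp
    next
      case False
      then have "j < cut V' P'" "sel V' P' j < u" using j(1,2) by auto
      then show ?thesis using lt rhoG_nth by simp
    qed
  qed
  then show "rhoG (V - {u}) (restr u P) \<in> Sset u \<tau>" unfolding V'_def P'_def .
  show "extP u (Aj u (V-{u}) (restr u P) (length \<tau>)) (V-{u}) (restr u P) = P"
    using eq j(3) lt unfolding V'_def P'_def by simp
qed

lemma PG_comp:
  assumes fin: "finite V'" and uV: "u \<notin> V'" and P'V: "P' \<in> PG V'" and S: "rhoG V' P' \<in> Sset u \<tau>"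
  shows "extP u (Aj u V' P' (length \<tau>)) V' P' \<in> PG (insert u V')"
    "rhoG (insert u V') (extP u (Aj u V' P' (length \<tau>)) V' P') = u # \<tau>"
    "restr u (extP u (Aj u V' P' (length \<tau>)) V' P') = P'"
proof -
  have ea: "P' \<in> ea V'" and tt: "tt V' P'" and tri: "tri V' P'" using P'V unfolding PG_def by auto
  let ?j = "length \<tau>"
  have S1: "take ?j (rhoG V' P') = \<tau>" "?j \<le> cut V' P'" "?j = cut V' P' \<or> rhoG V' P' ! ?j < u"
    using S rhoG_length[of V' P'] unfolding Sset_def by auto
  have S2: "?j = cut V' P' \<or> sel V' P' ?j < u"
  proof (cases "?j = cut V' P'")
    case False
    then have "?j < cut V' P'" using S1(2) by simp
    then show ?thesis using S1(3) rhoG_nth by simp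
  qed simp
  have v: "validA u V' P' (Aj u V' P' ?j)" using validA_Aj[OF fin tt S1(2)] .
  have tri2: "tri (insert u V') (extP u (Aj u V' P' ?j) V' P')"
    using tri_ext_iff[OF tri uV Aj_sub] v by simp
  show "extP u (Aj u V' P' (length \<tau>)) V' P' \<in> PG (insert u V')"
    unfolding PG_def using ea_ext[OF ea uV] tt_ext[OF tt uV] tri2 by simp
  show "rhoG (insert u V') (extP u (Aj u V' P' (length \<tau>)) V' P') = u # \<tau>"
    using rho_ext[OF fin tt uV S1(2) S2] S1(1) by simp
  show "restr u (extP u (Aj u V' P' (length \<tau>)) V' P') = P'"
    using restr_ext[OF ea uV] .
qed

lemma PG_step:
  assumes fin: "finite V" and uV: "u \<in> V"
  shows "card {P \<in> PG V. rhoG V P = u # \<tau>} = card {P' \<in> PG (V - {u}). rhoG (V - {u}) P' \<in> Sset u \<tau>}"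
proof -
  define V' where "V' = V - {u}"
  have VV: "insert u V' = V" "u \<notin> V'" "finite V'" using uV fin unfolding V'_def by auto
  let ?g = "\<lambda>P'. extP u (Aj u V' P' (length \<tau>)) V' P'"
  have "bij_betw (restr u) {P \<in> PG V. rhoG V P = u # \<tau>} {P' \<in> PG V'. rhoG V' P' \<in> Sset u \<tau>}"
  proof (rule bij_betw_byWitness[where f'="?g"])
    show "\<forall>a\<in>{P \<in> PG V. rhoG V P = u # \<tau>}. ?g (restr u a) = a"
      using PG_dec(4)[OF fin] unfolding V'_def by blast
    show "\<forall>a'\<in>{P' \<in> PG V'. rhoG V' P' \<in> Sset u \<tau>}. restr u (?g a') = a'"
      using PG_comp(3)[OF VV(3,2)] by blast
    show "restr u ` {P \<in> PG V. rhoG V P = u # \<tau>} \<subseteq> {P' \<in> PG V'. rhoG V' P' \<in> Sset u \<tau>}"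
      using PG_dec(2,3)[OF fin] unfolding V'_def by blast
    show "?g ` {P' \<in> PG V'. rhoG V' P' \<in> Sset u \<tau>} \<subseteq> {P \<in> PG V. rhoG V P = u # \<tau>}"
      using PG_comp(1,2)[OF VV(3,2)] VV(1) by blast
  qed
  then show ?thesis unfolding V'_def by (rule bij_betw_same_card)
qed

definition PF :: "nat set \<Rightarrow> (nat \<Rightarrow> nat) set" where
  "PF V = {b. (\<forall>x. x \<notin> V \<longrightarrow> b x = 0) \<and> (\<forall>k \<le> card V. k \<le> card {x\<in>V. b x < k})}"

definition blk :: "nat set \<Rightarrow> (nat \<Rightarrow> nat) \<Rightarrow> nat \<Rightarrow> nat set" where
  "blk V b j = {x\<in>V. b x = j}"

definition rr :: "nat set \<Rightarrow> (nat \<Rightarrow> nat) \<Rightarrow> nat" where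
  "rr V b = (LEAST j. blk V b j = {})"

definition rhoF :: "nat set \<Rightarrow> (nat \<Rightarrow> nat) \<Rightarrow> nat list" where
  "rhoF V b = map (\<lambda>j. Max (blk V b j)) [0..<rr V b]"

definition decF :: "nat \<Rightarrow> nat set \<Rightarrow> (nat \<Rightarrow> nat) \<Rightarrow> (nat \<Rightarrow> nat)" where
  "decF u V b = (\<lambda>x. if x \<in> V \<and> x \<noteq> u then (if b x = 0 then rr V b - 1 else b x - 1) else 0)"

definition extF :: "nat \<Rightarrow> nat \<Rightarrow> nat set \<Rightarrow> (nat \<Rightarrow> nat) \<Rightarrow> (nat \<Rightarrow> nat)" where
  "extF u j V' b' = (\<lambda>x. if x = u then 0 else if x \<in> V' then (if b' x = j then 0 else Suc (b' x)) else 0)"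

lemma PF_out: "b \<in> PF V \<Longrightarrow> x \<notin> V \<Longrightarrow> b x = 0"
  unfolding PF_def by auto

lemma PF_cnt: "b \<in> PF V \<Longrightarrow> k \<le> card V \<Longrightarrow> k \<le> card {x\<in>V. b x < k}"
  unfolding PF_def by auto

lemma PF_lt:
  assumes "finite V" "b \<in> PF V" "x \<in> V"
  shows "b x < card V"
proof -
  have c: "card V \<le> card {x\<in>V. b x < card V}" using PF_cnt[OF assms(2)] by simp
  have sub: "{x\<in>V. b x < card V} \<subseteq> V" by auto
  have "{x\<in>V. b x < card V} = V" using card_seteq[OF assms(1) sub c] .
  then show ?thesis using assms(3) by (metis (mono_tags, lifting) mem_Collect_eq)
qed

lemma blk_card:
  assumes "finite V" "b \<in> PF V"
  shows "blk V b (card V) = {}"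
proof -
  have "\<forall>x\<in>V. b x \<noteq> card V" using PF_lt[OF assms] by (metis less_irrefl)
  then show ?thesis unfolding blk_def by simp
qed

lemma rr_le:
  assumes "finite V" "b \<in> PF V"
  shows "rr V b \<le> card V"
  unfolding rr_def by (rule Least_le) (rule blk_card[OF assms])

lemma rr_empty:
  assumes "finite V" "b \<in> PF V"
  shows "blk V b (rr V b) = {}"
  unfolding rr_def by (rule LeastI) (rule blk_card[OF assms])

lemma rr_nonempty: "j < rr V b \<Longrightarrow> blk V b j \<noteq> {}"
  unfolding rr_def by (rule not_less_Least)

lemma rhoF_length: "length (rhoF V b) = rr V b"
  unfolding rhoF_def by simp

lemma rhoF_nth: "j < rr V b \<Longrightarrow> rhoF V b ! j = Max (blk V b j)"
  unfolding rhoF_def by simp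

lemma blk0:
  assumes "b \<in> PF V" "V \<noteq> {}" "finite V"
  shows "blk V b 0 \<noteq> {}"
proof -
  have "1 \<le> card V" using assms(2,3) by (simp add: Suc_le_eq card_gt_0_iff)
  then have "1 \<le> card {x\<in>V. b x < 1}" using PF_cnt[OF assms(1)] by blast
  then have "card {x\<in>V. b x < 1} \<noteq> 0" by simp
  then have "{x\<in>V. b x < 1} \<noteq> {}" by (metis card.empty)
  then show ?thesis unfolding blk_def by auto
qed

lemma PF_comp:
  assumes fin: "finite V'" and uV: "u \<notin> V'" and bV: "b' \<in> PF V'" and S: "rhoF V' b' \<in> Sset u \<tau>"
  shows "extF u (length \<tau>) V' b' \<in> PF (insert u V')"
    "rhoF (insert u V') (extF u (length \<tau>) V' b') = u # \<tau>"
    "decF u (insert u V') (extF u (length \<tau>) V' b') = b'"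
proof -
  define j where "j = length \<tau>"
  define b where "b = extF u j V' b'"
  define V where "V = insert u V'"
  have S1: "take j (rhoF V' b') = \<tau>" "j \<le> rr V' b'" "j = rr V' b' \<or> rhoF V' b' ! j < u"
    using S rhoF_length[of V' b'] unfolding Sset_def j_def by auto
  have S2: "j = rr V' b' \<or> Max (blk V' b' j) < u"
  proof (cases "j = rr V' b'")
    case False
    then have "j < rr V' b'" using S1(2) by simp
    then show ?thesis using S1(3) rhoF_nth by simp
  qed simp
  have finV: "finite V" unfolding V_def using fin by simp
  have cV: "card V = Suc (card V')" unfolding V_def using fin uV by simp
  have bu: "b u = 0" unfolding b_def extF_def by simp
  have bx: "\<And>x. x \<in> V' \<Longrightarrow> b x = (if b' x = j then 0 else Suc (b' x))"
    unfolding b_def extF_def using uV by auto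
  show "extF u (length \<tau>) V' b' \<in> PF (insert u V')"
    unfolding b_def[symmetric, unfolded j_def] V_def[symmetric] PF_def
  proof (intro CollectI conjI allI impI)
    fix x assume "x \<notin> V"
    then show "b x = 0" unfolding b_def extF_def V_def by auto
  next
    fix k assume k: "k \<le> card V"
    show "k \<le> card {x\<in>V. b x < k}"
    proof (cases k)
      case 0 then show ?thesis by simp
    next
      case (Suc k')
      then have k': "k' \<le> card V'" using k cV by simp
      have sub: "insert u {x\<in>V'. b' x < k'} \<subseteq> {x\<in>V. b x < k}"
        using bu bx Suc unfolding V_def by auto
      have "card (insert u {x\<in>V'. b' x < k'}) = Suc (card {x\<in>V'. b' x < k'})"
        using uV fin by simp
      moreover have "k' \<le> card {x\<in>V'. b' x < k'}" using PF_cnt[OF bV k'] .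
      moreover have "card (insert u {x\<in>V'. b' x < k'}) \<le> card {x\<in>V. b x < k}"
        using card_mono[OF _ sub] finV by simp
      ultimately show ?thesis using Suc by simp
    qed
  qed
  have B0: "blk V b 0 = insert u (blk V' b' j)"
    unfolding blk_def V_def using bu bx uV by (auto split: if_splits)
  have BS: "\<And>i. blk V b (Suc i) = (if i = j then {} else blk V' b' i)"
    unfolding blk_def V_def using bu bx uV by (auto split: if_splits)
  have rrb: "rr V b = Suc j"
    unfolding rr_def
  proof (rule Least_equality)
    show "blk V b (Suc j) = {}" using BS by simp
    fix y assume y: "blk V b y = {}"
    show "Suc j \<le> y"
    proof (rule ccontr)
      assume "\<not> Suc j \<le> y"
      then have yj: "y \<le> j" by simp
      show False
      proof (cases y)
        case 0 then show False using y B0 by simp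
      next
        case (Suc i)
        then have "i < rr V' b'" using yj S1(2) by simp
        then have "blk V' b' i \<noteq> {}" by (rule rr_nonempty)
        then show False using y BS Suc yj by simp
      qed
    qed
  qed
  have M0: "Max (blk V b 0) = u"
  proof (cases "j = rr V' b'")
    case True
    then have "blk V' b' j = {}" using rr_empty[OF fin bV] by simp
    then show ?thesis using B0 by simp
  next
    case False
    then have ne: "blk V' b' j \<noteq> {}" using S1(2) rr_nonempty by simp
    have lt: "Max (blk V' b' j) < u" using S2 False by simp
    have fb: "finite (blk V' b' j)" using fin unfolding blk_def by simp
    show ?thesis using B0 Max_insert[OF fb ne] lt by simp
  qed
  have "rhoF V b = Max (blk V b 0) # map (\<lambda>i. Max (blk V b (Suc i))) [0..<j]"
    unfolding rhoF_def rrb by (simp add: upt_conv_Cons map_Suc_upt[symmetric] del: upt_Suc)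
  also have "\<dots> = u # map (\<lambda>i. Max (blk V' b' i)) [0..<j]"
    using M0 BS by simp
  also have "\<dots> = u # \<tau>"
    using S1(1,2) unfolding rhoF_def by (simp add: take_map min_def)
  finally show "rhoF (insert u V') (extF u (length \<tau>) V' b') = u # \<tau>"
    unfolding V_def b_def j_def .
  have "decF u V b = b'"
  proof (intro ext)
    fix x
    show "decF u V b x = b' x"
    proof (cases "x \<in> V'")
      case True
      then have xu: "x \<noteq> u" using uV by blast
      have d: "decF u V b x = (if b x = 0 then rr V b - 1 else b x - 1)"
        unfolding decF_def V_def using True xu by simp
      show ?thesis using d bx[OF True] rrb by (cases "b' x = j") simp_all
    next
      case False
      have "x \<notin> V \<or> x = u" using False unfolding V_def by blast
      then have "decF u V b x = 0" unfolding decF_def by auto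
      then show ?thesis using PF_out[OF bV False] by simp
    qed
  qed
  then show "decF u (insert u V') (extF u (length \<tau>) V' b') = b'"
    unfolding V_def b_def j_def .
qed


lemma PF_dec:
  assumes fin: "finite V" and bV: "b \<in> PF V" and rh: "rhoF V b = u # \<tau>"
  shows "u \<in> V" "decF u V b \<in> PF (V - {u})" "rhoF (V - {u}) (decF u V b) \<in> Sset u \<tau>"
    "extF u (length \<tau>) (V - {u}) (decF u V b) = b"
proof -
  define j where "j = length \<tau>"
  define V' where "V' = V - {u}"
  define b' where "b' = decF u V b"
  have rrj: "rr V b = Suc j" using rh rhoF_length[of V b] unfolding j_def by simp
  have u0: "Max (blk V b 0) = u" using rh rhoF_nth[of 0 V b] rrj by simp
  have ne0: "blk V b 0 \<noteq> {}" using rr_nonempty[of 0 V b] rrj by simp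
  have fb0: "finite (blk V b 0)" using fin unfolding blk_def by simp
  have ub: "u \<in> blk V b 0" using Max_in[OF fb0 ne0] u0 by simp
  show uV: "u \<in> V" using ub unfolding blk_def by simp
  have bu: "b u = 0" using ub unfolding blk_def by simp
  have emp: "blk V b (Suc j) = {}" using rr_empty[OF fin bV] rrj by simp
  have finV': "finite V'" unfolding V'_def using fin by simp
  have cV: "card V = Suc (card V')" unfolding V'_def using fin uV
    by (metis card_Suc_Diff1)
  have b'x: "\<And>x. x \<in> V' \<Longrightarrow> b' x = (if b x = 0 then j else b x - 1)"
    unfolding b'_def decF_def V'_def using rrj by auto
  have b'o: "\<And>x. x \<notin> V' \<Longrightarrow> b' x = 0"
    unfolding b'_def decF_def V'_def by auto
  have nSj: "\<And>x. x \<in> V \<Longrightarrow> b x \<noteq> Suc j" using emp unfolding blk_def by auto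
  have Bj: "blk V' b' j = blk V b 0 - {u}"
  proof (rule set_eqI)
    fix x
    show "x \<in> blk V' b' j \<longleftrightarrow> x \<in> blk V b 0 - {u}"
    proof (cases "x \<in> V'")
      case True
      then have xV: "x \<in> V" "x \<noteq> u" unfolding V'_def by auto
      show ?thesis using b'x[OF True] nSj[OF xV(1)] xV True unfolding blk_def
        by (cases "b x = 0") auto
    next
      case False
      then show ?thesis unfolding blk_def V'_def by auto
    qed
  qed
  have Bi: "\<And>i. i \<noteq> j \<Longrightarrow> blk V' b' i = blk V b (Suc i)"
  proof (rule set_eqI)
    fix i x assume ij: "i \<noteq> j"
    show "x \<in> blk V' b' i \<longleftrightarrow> x \<in> blk V b (Suc i)"
    proof (cases "x \<in> V'")
      case True
      then have xV: "x \<in> V" "x \<noteq> u" unfolding V'_def by auto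
      show ?thesis using b'x[OF True] xV True ij unfolding blk_def
        by (cases "b x") auto
    next
      case False
      then have "x \<notin> V \<or> x = u" unfolding V'_def by auto
      then show ?thesis using False bu unfolding blk_def by auto
    qed
  qed
  show "decF u V b \<in> PF (V - {u})"
    unfolding b'_def[symmetric] V'_def[symmetric] PF_def
  proof (intro CollectI conjI allI impI)
    fix x assume "x \<notin> V'" then show "b' x = 0" by (rule b'o)
  next
    fix k assume k: "k \<le> card V'"
    show "k \<le> card {x\<in>V'. b' x < k}"
    proof (cases "j < k")
      case True
      have eq: "{x\<in>V'. b' x < k} = {x\<in>V. b x < Suc k} - {u}"
      proof (rule set_eqI)
        fix x
        show "x \<in> {x\<in>V'. b' x < k} \<longleftrightarrow> x \<in> {x\<in>V. b x < Suc k} - {u}"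
        proof (cases "x \<in> V'")
          case xV': True
          then have xV: "x \<in> V" "x \<noteq> u" unfolding V'_def by auto
          show ?thesis using b'x[OF xV'] xV xV' True by (cases "b x = 0") auto
        next
          case False
          then show ?thesis unfolding V'_def by auto
        qed
      qed
      have "Suc k \<le> card V" using k cV by simp
      then have c1: "Suc k \<le> card {x\<in>V. b x < Suc k}" using PF_cnt[OF bV] by blast
      have uin: "u \<in> {x\<in>V. b x < Suc k}" using uV bu by simp
      have "card ({x\<in>V. b x < Suc k} - {u}) = card {x\<in>V. b x < Suc k} - 1"
        using card_Diff_singleton[OF uin] by simp
      then show ?thesis using eq c1 by simp
    next
      case False
      then have kj: "k \<le> j" by simp
      define f where "f = (\<lambda>i. SOME x. x \<in> blk V b (Suc i))"
      have fi: "\<And>i. i < k \<Longrightarrow> f i \<in> blk V b (Suc i)"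
      proof -
        fix i assume "i < k"
        then have "Suc i < rr V b" using kj rrj by simp
        then have "blk V b (Suc i) \<noteq> {}" by (rule rr_nonempty)
        then show "f i \<in> blk V b (Suc i)" unfolding f_def by (simp add: some_in_eq)
      qed
      have inj: "inj_on f {..<k}"
      proof (rule inj_onI)
        fix i i' assume h: "i \<in> {..<k}" "i' \<in> {..<k}" "f i = f i'"
        have "b (f i) = Suc i" using fi[of i] h(1) unfolding blk_def by simp
        moreover have "b (f i') = Suc i'" using fi[of i'] h(2) unfolding blk_def by simp
        moreover have "b (f i) = b (f i')" using h(3) by (rule arg_cong)
        ultimately show "i = i'" by (metis nat.inject)
      qed
      have img: "f ` {..<k} \<subseteq> {x\<in>V'. b' x < k}"
      proof
        fix y assume "y \<in> f ` {..<k}"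
        then obtain i where i: "i < k" "y = f i" by auto
        then have y: "y \<in> V" "b y = Suc i" using fi unfolding blk_def by auto
        then have "y \<noteq> u" using bu by auto
        then have yV': "y \<in> V'" using y unfolding V'_def by simp
        then show "y \<in> {x\<in>V'. b' x < k}" using b'x[OF yV'] y i by simp
      qed
      have "card {..<k} \<le> card {x\<in>V'. b' x < k}"
        using card_inj_on_le[OF inj img] finV' by simp
      then show ?thesis by simp
    qed
  qed
  have rhotau: "\<tau> = map (\<lambda>i. Max (blk V b (Suc i))) [0..<j]"
  proof -
    have "rhoF V b = Max (blk V b 0) # map (\<lambda>i. Max (blk V b (Suc i))) [0..<j]"
      unfolding rhoF_def rrj by (simp add: upt_conv_Cons map_Suc_upt[symmetric] del: upt_Suc)
    then show ?thesis using rh by simp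
  qed
  have take: "take j (rhoF V' b') = \<tau>" if jr: "j \<le> rr V' b'"
  proof -
    have "take j (rhoF V' b') = map (\<lambda>i. Max (blk V' b' i)) [0..<j]"
      unfolding rhoF_def using jr by (simp add: take_map min_def)
    also have "\<dots> = map (\<lambda>i. Max (blk V b (Suc i))) [0..<j]"
      using Bi by simp
    finally show ?thesis using rhotau by simp
  qed
  have "rhoF V' b' \<in> Sset u \<tau>"
  proof (cases "blk V b 0 = {u}")
    case True
    then have ej: "blk V' b' j = {}" using Bj by simp
    have rr': "rr V' b' = j"
      unfolding rr_def
    proof (rule Least_equality)
      show "blk V' b' j = {}" by (rule ej)
      fix y assume y: "blk V' b' y = {}"
      show "j \<le> y"
      proof (rule ccontr)
        assume "\<not> j \<le> y"
        then have "y < j" by simp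
        then have "Suc y < rr V b" using rrj by simp
        then have "blk V b (Suc y) \<noteq> {}" by (rule rr_nonempty)
        then show False using y Bi \<open>y < j\<close> by simp
      qed
    qed
    show ?thesis unfolding Sset_def using take rr' rhoF_length[of V' b'] j_def by simp
  next
    case False
    then have nej: "blk V' b' j \<noteq> {}" using Bj ub by auto
    have rr': "j < rr V' b'"
    proof (rule ccontr)
      assume "\<not> j < rr V' b'"
      then have "rr V' b' \<le> j" by simp
      moreover have "blk V' b' (rr V' b') = {}" by (rule rr_empty[OF finV']) (use \<open>decF u V b \<in> PF (V - {u})\<close> in \<open>simp add: b'_def V'_def\<close>)
      ultimately show False
      proof (cases "rr V' b' = j")
        case True then show False using nej \<open>blk V' b' (rr V' b') = {}\<close> by simp
      next
        case False
        then have "rr V' b' < j" using \<open>rr V' b' \<le> j\<close> by simp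
        then have "Suc (rr V' b') < rr V b" using rrj by simp
        then have "blk V b (Suc (rr V' b')) \<noteq> {}" by (rule rr_nonempty)
        then show False using Bi[of "rr V' b'"] False \<open>blk V' b' (rr V' b') = {}\<close> by simp
      qed
    qed
    have "Max (blk V' b' j) < u"
    proof -
      have fbj: "finite (blk V' b' j)" using finV' unfolding blk_def by simp
      have "Max (blk V' b' j) \<in> blk V b 0 - {u}" using Max_in[OF fbj nej] Bj by simp
      moreover have "\<And>x. x \<in> blk V b 0 \<Longrightarrow> x \<le> u" using Max_ge[OF fb0] u0 by metis
      ultimately show ?thesis by fastforce
    qed
    then have "rhoF V' b' ! j < u" using rhoF_nth[OF rr'] by simp
    then show ?thesis unfolding Sset_def using take rr' rhoF_length[of V' b'] j_def by simp
  qed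
  then show "rhoF (V - {u}) (decF u V b) \<in> Sset u \<tau>" unfolding V'_def b'_def .
  have "extF u j V' b' = b"
  proof (intro ext)
    fix x
    show "extF u j V' b' x = b x"
    proof (cases "x \<in> V'")
      case True
      then have xV: "x \<in> V" "x \<noteq> u" unfolding V'_def by auto
      have e: "extF u j V' b' x = (if b' x = j then 0 else Suc (b' x))" unfolding extF_def using True xV by simp
      show ?thesis using e b'x[OF True] nSj[OF xV(1)] by (cases "b x") auto
    next
      case False
      then have "x \<notin> V \<or> x = u" unfolding V'_def by auto
      then show ?thesis using bu PF_out[OF bV] unfolding extF_def using False by auto
    qed
  qed
  then show "extF u (length \<tau>) (V - {u}) (decF u V b) = b" unfolding j_def V'_def b'_def .
qed

lemma PF_step:
  assumes fin: "finite V" and uV: "u \<in> V"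
  shows "card {b \<in> PF V. rhoF V b = u # \<tau>} = card {b' \<in> PF (V - {u}). rhoF (V - {u}) b' \<in> Sset u \<tau>}"
proof -
  define V' where "V' = V - {u}"
  have VV: "insert u V' = V" "u \<notin> V'" "finite V'" using uV fin unfolding V'_def by auto
  let ?g = "\<lambda>b'. extF u (length \<tau>) V' b'"
  have "bij_betw (decF u V) {b \<in> PF V. rhoF V b = u # \<tau>} {b' \<in> PF V'. rhoF V' b' \<in> Sset u \<tau>}"
  proof (rule bij_betw_byWitness[where f'="?g"])
    show "\<forall>a\<in>{b \<in> PF V. rhoF V b = u # \<tau>}. ?g (decF u V a) = a"
      using PF_dec(4)[OF fin] unfolding V'_def by blast
    show "\<forall>a'\<in>{b' \<in> PF V'. rhoF V' b' \<in> Sset u \<tau>}. decF u V (?g a') = a'"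
      using PF_comp(3)[OF VV(3,2)] VV(1) by blast
    show "decF u V ` {b \<in> PF V. rhoF V b = u # \<tau>} \<subseteq> {b' \<in> PF V'. rhoF V' b' \<in> Sset u \<tau>}"
      using PF_dec(2,3)[OF fin] unfolding V'_def by blast
    show "?g ` {b' \<in> PF V'. rhoF V' b' \<in> Sset u \<tau>} \<subseteq> {b \<in> PF V. rhoF V b = u # \<tau>}"
      using PF_comp(1,2)[OF VV(3,2)] VV(1) by blast
  qed
  then show ?thesis unfolding V'_def by (rule bij_betw_same_card)
qed


lemma finite_etype: "finite (UNIV :: etype set)"
proof -
  have "(UNIV :: etype set) = {Down, Up, Downish}"
  proof (rule set_eqI)
    fix x :: etype show "x \<in> UNIV \<longleftrightarrow> x \<in> {Down, Up, Downish}" by (cases x) auto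
  qed
  then show ?thesis by (metis finite.emptyI finite.insertI)
qed

lemma PG_finite:
  assumes "finite V"
  shows "finite (PG V)"
proof -
  define B where "B = {g :: nat \<Rightarrow> etype. \<forall>k. (k \<in> V \<longrightarrow> g k \<in> UNIV) \<and> (k \<notin> V \<longrightarrow> g k = Down)}"
  have fB: "finite B" unfolding B_def by (rule finite_set_of_finite_funs[OF assms finite_etype])
  have "PG V \<subseteq> {f. \<forall>j. (j \<in> V \<longrightarrow> f j \<in> B) \<and> (j \<notin> V \<longrightarrow> f j = (\<lambda>_. Down))}"
  proof
    fix P assume "P \<in> PG V"
    then have ea: "P \<in> ea V" unfolding PG_def by simp
    have 1: "\<And>j. j \<in> V \<Longrightarrow> P j \<in> B" using ea unfolding ea_def B_def by auto
    have 2: "\<And>j. j \<notin> V \<Longrightarrow> P j = (\<lambda>_. Down)" using ea unfolding ea_def by auto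
    show "P \<in> {f. \<forall>j. (j \<in> V \<longrightarrow> f j \<in> B) \<and> (j \<notin> V \<longrightarrow> f j = (\<lambda>_. Down))}"
      using 1 2 by blast
  qed
  moreover have "finite {f. \<forall>j. (j \<in> V \<longrightarrow> f j \<in> B) \<and> (j \<notin> V \<longrightarrow> f j = (\<lambda>_. Down))}"
    by (rule finite_set_of_finite_funs[OF assms fB])
  ultimately show ?thesis by (rule finite_subset)
qed

lemma PF_finite:
  assumes "finite V"
  shows "finite (PF V)"
proof -
  have "PF V \<subseteq> {f. \<forall>x. (x \<in> V \<longrightarrow> f x \<in> {..<card V}) \<and> (x \<notin> V \<longrightarrow> f x = 0)}"
    using PF_lt[OF assms] PF_out by blast
  moreover have "finite {f. \<forall>x. (x \<in> V \<longrightarrow> f x \<in> {..<card V}) \<and> (x \<notin> V \<longrightarrow> f x = (0::nat))}"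
    by (rule finite_set_of_finite_funs[OF assms]) simp
  ultimately show ?thesis by (rule finite_subset)
qed

lemma rhoG_set:
  assumes "finite V" "tt V P"
  shows "set (rhoG V P) \<subseteq> V" "length (rhoG V P) \<le> card V"
proof -
  show "length (rhoG V P) \<le> card V" using rhoG_length cut_le by metis
  show "set (rhoG V P) \<subseteq> V"
  proof
    fix x assume "x \<in> set (rhoG V P)"
    then obtain i where i: "i < cut V P" "x = sel V P i" unfolding rhoG_def by auto
    then have "i < card V" using cut_le[of V P] by simp
    then show "x \<in> V" using sel_props[OF assms] i by simp
  qed
qed

lemma rhoF_set:
  assumes "finite V" "b \<in> PF V"
  shows "set (rhoF V b) \<subseteq> V" "length (rhoF V b) \<le> card V"
proof -
  show "length (rhoF V b) \<le> card V" using rhoF_length rr_le[OF assms] by metis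
  show "set (rhoF V b) \<subseteq> V"
  proof
    fix x assume "x \<in> set (rhoF V b)"
    then obtain j where j: "j < rr V b" "x = Max (blk V b j)" unfolding rhoF_def by auto
    have ne: "blk V b j \<noteq> {}" using rr_nonempty[OF j(1)] .
    have fb: "finite (blk V b j)" using assms(1) unfolding blk_def by simp
    have "x \<in> blk V b j" using Max_in[OF fb ne] j(2) by simp
    then show "x \<in> V" unfolding blk_def by simp
  qed
qed

lemma PG_empty: "PG {} = {\<lambda>_ _. Down}"
proof -
  have "ea {} = {\<lambda>_ _. Down}" unfolding ea_def by auto
  moreover have "tt {} P" "tri {} P" for P unfolding tt_def tri_def by auto
  ultimately show ?thesis unfolding PG_def by auto
qed

lemma PF_empty: "PF {} = {\<lambda>_. 0}"
  unfolding PF_def by auto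

lemma rhoG_empty: "rhoG {} P = []"
  unfolding rhoG_def using cut_le[of "{}" P] by simp

lemma rhoF_empty: "rhoF {} b = []"
proof -
  have "rr {} b = 0" unfolding rr_def blk_def by simp
  then show ?thesis unfolding rhoF_def by simp
qed

lemma rhoG_ne:
  assumes "finite V" "V \<noteq> {}" "P \<in> PG V"
  shows "rhoG V P \<noteq> []"
proof -
  have tt: "tt V P" using assms(3) unfolding PG_def by simp
  have cV: "0 < card V" using assms(1,2) by (simp add: card_gt_0_iff)
  have u: "sel V P 0 \<in> V" "rank V P (sel V P 0) = 0" using sel_props[OF assms(1) tt cV] by auto
  have g: "good V P (sel V P 0)"
    unfolding good_def
  proof (intro ballI impI)
    fix y assume y: "y \<in> V" "sel V P 0 < y"
    have "rank V P y \<noteq> rank V P (sel V P 0)"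
      using inj_onD[OF rank_inj[OF assms(1) tt] _ y(1) u(1)] y(2) by fastforce
    then have "rank V P (sel V P 0) < rank V P y" using u(2) by simp
    then have "arc P (sel V P 0) y" using arc_iff_rank[OF assms(1) tt u(1) y(1)] by simp
    then show "P (sel V P 0) y \<noteq> Down" using y(2) unfolding arc_def by auto
  qed
  have "cut V P \<noteq> 0"
  proof
    assume c: "cut V P = 0"
    then have "\<not> good V P (sel V P (cut V P))" using cut_bad[of V P] cV by simp
    then show False using g c by simp
  qed
  then show ?thesis using rhoG_length[of V P] by auto
qed

lemma rhoF_ne:
  assumes "finite V" "V \<noteq> {}" "b \<in> PF V"
  shows "rhoF V b \<noteq> []"
proof -
  have "rr V b \<noteq> 0"
  proof
    assume "rr V b = 0"
    then have "blk V b 0 = {}" using rr_empty[OF assms(1,3)] by simp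
    then show False using blk0[OF assms(3,2,1)] by simp
  qed
  then show ?thesis using rhoF_length[of V b] by auto
qed

lemma card_set_version:
  assumes fin: "finite V" and eq: "\<And>\<sigma>. card {P \<in> PG V. rhoG V P = \<sigma>} = card {b \<in> PF V. rhoF V b = \<sigma>}"
  shows "card {P \<in> PG V. rhoG V P \<in> S} = card {b \<in> PF V. rhoF V b \<in> S}"
proof -
  define L where "L = {\<sigma>. set \<sigma> \<subseteq> V \<and> length \<sigma> \<le> card V}"
  define I where "I = S \<inter> L"
  have fI: "finite I" unfolding I_def L_def using finite_lists_length_le[OF fin] by simp
  have LG: "\<And>P. P \<in> PG V \<Longrightarrow> rhoG V P \<in> L"
    unfolding L_def using rhoG_set[OF fin] unfolding PG_def by blast
  have LF: "\<And>b. b \<in> PF V \<Longrightarrow> rhoF V b \<in> L"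
    unfolding L_def using rhoF_set[OF fin] by blast
  have G: "{P \<in> PG V. rhoG V P \<in> S} = (\<Union>\<sigma>\<in>I. {P \<in> PG V. rhoG V P = \<sigma>})"
    unfolding I_def using LG by blast
  have F: "{b \<in> PF V. rhoF V b \<in> S} = (\<Union>\<sigma>\<in>I. {b \<in> PF V. rhoF V b = \<sigma>})"
    unfolding I_def using LF by blast
  have "card {P \<in> PG V. rhoG V P \<in> S} = (\<Sum>\<sigma>\<in>I. card {P \<in> PG V. rhoG V P = \<sigma>})"
    unfolding G by (rule card_UN_disjoint[OF fI]) (use PG_finite[OF fin] in auto)
  also have "\<dots> = (\<Sum>\<sigma>\<in>I. card {b \<in> PF V. rhoF V b = \<sigma>})" using eq by simp
  also have "\<dots> = card {b \<in> PF V. rhoF V b \<in> S}"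
    unfolding F by (rule card_UN_disjoint[OF fI, symmetric]) (use PF_finite[OF fin] in auto)
  finally show ?thesis .
qed

lemma main_eq:
  assumes "finite V"
  shows "card {P \<in> PG V. rhoG V P = \<sigma>} = card {b \<in> PF V. rhoF V b = \<sigma>}"
  using assms
proof (induction "card V" arbitrary: V \<sigma> rule: less_induct)
  case less
  note fin = less.prems
  show ?case
  proof (cases \<sigma>)
    case Nil
    show ?thesis
    proof (cases "V = {}")
      case True
      then show ?thesis using Nil by (simp add: PG_empty PF_empty rhoG_empty rhoF_empty)
    next
      case False
      have e1: "{P \<in> PG V. rhoG V P = \<sigma>} = {}" using rhoG_ne[OF fin False] Nil by blast
      have e2: "{b \<in> PF V. rhoF V b = \<sigma>} = {}" using rhoF_ne[OF fin False] Nil by blast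
      show ?thesis unfolding e1 e2 by simp
    qed
  next
    case (Cons u \<tau>)
    show ?thesis
    proof (cases "u \<in> V")
      case False
      have e1: "{P \<in> PG V. rhoG V P = \<sigma>} = {}" using PG_dec(1)[OF fin] False Cons by blast
      have e2: "{b \<in> PF V. rhoF V b = \<sigma>} = {}" using PF_dec(1)[OF fin] False Cons by blast
      show ?thesis unfolding e1 e2 by simp
    next
      case True
      have lt: "card (V - {u}) < card V" using card_Diff1_less[OF fin True] .
      have fin': "finite (V - {u})" using fin by simp
      have IH: "\<And>\<sigma>'. card {P \<in> PG (V - {u}). rhoG (V - {u}) P = \<sigma>'} = card {b \<in> PF (V - {u}). rhoF (V - {u}) b = \<sigma>'}"
        using less.hyps[OF lt fin'] .
      have "card {P \<in> PG V. rhoG V P = \<sigma>} = card {P' \<in> PG (V - {u}). rhoG (V - {u}) P' \<in> Sset u \<tau>}"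
        using PG_step[OF fin True] Cons by simp
      also have "\<dots> = card {b' \<in> PF (V - {u}). rhoF (V - {u}) b' \<in> Sset u \<tau>}"
        by (rule card_set_version[OF fin' IH])
      also have "\<dots> = card {b \<in> PF V. rhoF V b = \<sigma>}"
        using PF_step[OF fin True] Cons by simp
      finally show ?thesis .
    qed
  qed
qed

lemma card_PG_PF:
  assumes "finite V"
  shows "card (PG V) = card (PF V)"
  using card_set_version[OF assms main_eq[OF assms], of UNIV] by simp

lemma modeq:
  fixes v i s q :: nat
  assumes "v < q" "i < q" "s \<le> q"
  shows "(v + (q - s)) mod q = i \<longleftrightarrow> v = (i + s) mod q"
proof
  assume h: "(v + (q - s)) mod q = i"
  have "(i + s) mod q = ((v + (q - s)) mod q + s) mod q" using h by simp
  also have "\<dots> = (v + (q - s) + s) mod q" by (simp add: mod_add_left_eq)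
  also have "\<dots> = (v + q) mod q" using assms(3) by simp
  also have "\<dots> = v" using assms(1) by simp
  finally show "v = (i + s) mod q" by simp
next
  assume h: "v = (i + s) mod q"
  have "(v + (q - s)) mod q = ((i + s) mod q + (q - s)) mod q" using h by simp
  also have "\<dots> = (i + s + (q - s)) mod q" by (simp add: mod_add_left_eq)
  also have "\<dots> = (i + q) mod q" using assms(3) by simp
  also have "\<dots> = i" using assms(2) by simp
  finally show "(v + (q - s)) mod q = i" .
qed

lemma sum_split_lt:
  fixes f :: "nat \<Rightarrow> int"
  shows "(\<Sum>i<m+n. f i) = (\<Sum>i<m. f i) + (\<Sum>i\<in>{m..<m+n}. f i)"
  using sum.atLeastLessThan_concat[of 0 m "m+n" f] by (simp add: atLeast0LessThan)


definition G :: "nat \<Rightarrow> (nat \<Rightarrow> nat) \<Rightarrow> nat \<Rightarrow> int" where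
  "G q a m = (\<Sum>i<m. int (a (i mod q)) - 1)"

lemma G_shift:
  assumes "0 < q" "(\<Sum>v<q. a v) = q - 1" "m < q"
  shows "G q a (q + m) = G q a m - 1"
proof -
  have "G q a (q + m) = (\<Sum>i<q. int (a (i mod q)) - 1) + (\<Sum>i\<in>{q..<q+m}. int (a (i mod q)) - 1)"
    unfolding G_def by (rule sum_split_lt)
  also have "(\<Sum>i<q. int (a (i mod q)) - 1) = (\<Sum>i<q. int (a i) - 1)"
    by (rule sum.cong) auto
  also have "\<dots> = int (\<Sum>i<q. a i) - int q" by (simp add: sum_subtractf)
  also have "\<dots> = -1" using assms(1,2) by simp
  also have "(\<Sum>i\<in>{q..<q+m}. int (a (i mod q)) - 1) = (\<Sum>i\<in>{0..<m}. int (a ((i + q) mod q)) - 1)"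
    using sum.shift_bounds_nat_ivl[of "\<lambda>i. int (a (i mod q)) - 1" 0 q m] by (simp add: add.commute)
  also have "\<dots> = G q a m" unfolding G_def by (intro sum.cong) (auto simp: atLeast0LessThan)
  finally show ?thesis by simp
qed

lemma G_window:
  "(\<Sum>i<k. int (a ((s + i) mod q))) - int k = G q a (s + k) - G q a s"
proof -
  have "G q a (s + k) = G q a s + (\<Sum>i\<in>{s..<s+k}. int (a (i mod q)) - 1)"
    unfolding G_def by (rule sum_split_lt)
  also have "(\<Sum>i\<in>{s..<s+k}. int (a (i mod q)) - 1) = (\<Sum>i\<in>{0..<k}. int (a ((i + s) mod q)) - 1)"
    using sum.shift_bounds_nat_ivl[of "\<lambda>i. int (a (i mod q)) - 1" 0 s k] by (simp add: add.commute)
  also have "\<dots> = (\<Sum>i<k. int (a ((s + i) mod q))) - int k"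
    by (simp add: sum_subtractf atLeast0LessThan add.commute)
  finally show ?thesis by simp
qed

definition cgood :: "nat \<Rightarrow> (nat \<Rightarrow> nat) \<Rightarrow> nat \<Rightarrow> bool" where
  "cgood q a s = (\<forall>k<q. k \<le> (\<Sum>i<k. a ((s + i) mod q)))"

lemma cgood_G: "cgood q a s \<longleftrightarrow> (\<forall>k<q. G q a s \<le> G q a (s + k))"
proof -
  have "\<And>k. (k \<le> (\<Sum>i<k. a ((s + i) mod q))) \<longleftrightarrow> G q a s \<le> G q a (s + k)"
  proof -
    fix k
    have e: "int (\<Sum>i<k. a ((s + i) mod q)) = (\<Sum>i<k. int (a ((s + i) mod q)))" by simp
    have "(k \<le> (\<Sum>i<k. a ((s + i) mod q))) \<longleftrightarrow> int k \<le> (\<Sum>i<k. int (a ((s + i) mod q)))"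
      using e by (metis of_nat_le_iff)
    also have "\<dots> \<longleftrightarrow> 0 \<le> (\<Sum>i<k. int (a ((s + i) mod q))) - int k" by simp
    also have "\<dots> \<longleftrightarrow> G q a s \<le> G q a (s + k)" using G_window[where k=k and a=a and s=s and q=q] by simp
    finally show "(k \<le> (\<Sum>i<k. a ((s + i) mod q))) \<longleftrightarrow> G q a s \<le> G q a (s + k)" .
  qed
  then show ?thesis unfolding cgood_def by simp
qed

lemma cycle_lemma:
  assumes q: "0 < q" and tot: "(\<Sum>v<q. a v) = q - 1"
  shows "\<exists>!s. s < q \<and> cgood q a s"
proof -
  define mn where "mn = Min (G q a ` {..<q})"
  have fin: "finite (G q a ` {..<q})" by simp
  have ne: "G q a ` {..<q} \<noteq> {}" using q by auto
  have mn_le: "\<And>m. m < q \<Longrightarrow> mn \<le> G q a m" unfolding mn_def using Min_le[OF fin] by simp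
  have "mn \<in> G q a ` {..<q}" unfolding mn_def using Min_in[OF fin ne] .
  then have exm: "\<exists>m. m < q \<and> G q a m = mn" by auto
  define s0 where "s0 = (LEAST m. m < q \<and> G q a m = mn)"
  have s0: "s0 < q" "G q a s0 = mn" using LeastI_ex[OF exm] unfolding s0_def by auto
  have s0min: "\<And>m. m < s0 \<Longrightarrow> mn < G q a m"
  proof -
    fix m assume m: "m < s0"
    then have "\<not> (m < q \<and> G q a m = mn)" unfolding s0_def using not_less_Least by blast
    then show "mn < G q a m" using m s0(1) mn_le[of m] by simp
  qed
  have good0: "cgood q a s0"
    unfolding cgood_G
  proof (intro allI impI)
    fix k assume k: "k < q"
    show "G q a s0 \<le> G q a (s0 + k)"
    proof (cases "s0 + k < q")
      case True then show ?thesis using mn_le s0(2) by simp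
    next
      case False
      define m where "m = s0 + k - q"
      have m: "m < s0" "s0 + k = q + m" using False k unfolding m_def by auto
      have "G q a (s0 + k) = G q a m - 1" using G_shift[OF q tot, of m] m s0(1) by simp
      then show ?thesis using s0min[OF m(1)] s0(2) by simp
    qed
  qed
  have uniq: "\<And>s. s < q \<Longrightarrow> cgood q a s \<Longrightarrow> s = s0"
  proof -
    fix s assume s: "s < q" "cgood q a s"
    then have gs: "\<And>k. k < q \<Longrightarrow> G q a s \<le> G q a (s + k)" unfolding cgood_G by blast
    show "s = s0"
    proof (rule ccontr)
      assume "s \<noteq> s0"
      then consider "s < s0" | "s0 < s" by linarith
      then show False
      proof cases
        case 1
        have "G q a s \<le> G q a (s + (s0 - s))" using gs[of "s0 - s"] s0(1) by simp
        then have "G q a s \<le> G q a s0" using 1 by simp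
        then show False using s0min[OF 1] s0(2) by simp
      next
        case 2
        have "G q a s \<le> G q a (s + (q + s0 - s))" using gs[of "q + s0 - s"] 2 s(1) by simp
        moreover have "s + (q + s0 - s) = q + s0" using 2 s(1) by simp
        moreover have "G q a (q + s0) = G q a s0 - 1" using G_shift[OF q tot s0(1)] .
        ultimately have "G q a s \<le> G q a s0 - 1" by simp
        then show False using mn_le[OF s(1)] s0(2) by simp
      qed
    qed
  qed
  show ?thesis using good0 s0(1) uniq by blast
qed


definition Fn :: "nat set \<Rightarrow> (nat \<Rightarrow> nat) set" where
  "Fn V = {f. (\<forall>x. x \<notin> V \<longrightarrow> f x = 0) \<and> (\<forall>x\<in>V. f x < Suc (card V))}"

definition rot :: "nat set \<Rightarrow> nat \<Rightarrow> (nat \<Rightarrow> nat) \<Rightarrow> (nat \<Rightarrow> nat)" where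
  "rot V s f = (\<lambda>x. if x \<in> V then (f x + (Suc (card V) - s)) mod Suc (card V) else 0)"

definition unrot :: "nat set \<Rightarrow> nat \<Rightarrow> (nat \<Rightarrow> nat) \<Rightarrow> (nat \<Rightarrow> nat)" where
  "unrot V s b = (\<lambda>x. if x \<in> V then (b x + s) mod Suc (card V) else 0)"

definition cnt :: "nat set \<Rightarrow> (nat \<Rightarrow> nat) \<Rightarrow> nat \<Rightarrow> nat" where
  "cnt V f v = card {x\<in>V. f x = v}"

lemma cnt_total:
  assumes fin: "finite V" and f: "f \<in> Fn V"
  shows "(\<Sum>v<Suc (card V). cnt V f v) = card V"
proof -
  have "V = (\<Union>v\<in>{..<Suc (card V)}. {x\<in>V. f x = v})" using f unfolding Fn_def by auto
  then have "card V = card (\<Union>v\<in>{..<Suc (card V)}. {x\<in>V. f x = v})" by simp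
  also have "\<dots> = (\<Sum>v<Suc (card V). card {x\<in>V. f x = v})"
    by (rule card_UN_disjoint) (use fin in auto)
  finally show ?thesis unfolding cnt_def by simp
qed

lemma rot_count:
  assumes fin: "finite V" and f: "f \<in> Fn V" and s: "s < Suc (card V)" and k: "k < Suc (card V)"
  shows "card {x\<in>V. rot V s f x < k} = (\<Sum>i<k. cnt V f ((s + i) mod Suc (card V)))"
proof -
  let ?q = "Suc (card V)"
  have fx: "\<And>x. x \<in> V \<Longrightarrow> f x < ?q" using f unfolding Fn_def by auto
  have eq: "{x\<in>V. rot V s f x < k} = (\<Union>i\<in>{..<k}. {x\<in>V. f x = (i + s) mod ?q})"
  proof (rule set_eqI)
    fix x
    show "x \<in> {x\<in>V. rot V s f x < k} \<longleftrightarrow> x \<in> (\<Union>i\<in>{..<k}. {x\<in>V. f x = (i + s) mod ?q})"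
    proof
      assume "x \<in> {x\<in>V. rot V s f x < k}"
      then have x: "x \<in> V" "(f x + (?q - s)) mod ?q < k" unfolding rot_def by auto
      define i where "i = (f x + (?q - s)) mod ?q"
      have "f x = (i + s) mod ?q" using modeq[OF fx[OF x(1)] _ , of i s] s unfolding i_def by simp
      then show "x \<in> (\<Union>i\<in>{..<k}. {x\<in>V. f x = (i + s) mod ?q})" using x i_def by auto
    next
      assume "x \<in> (\<Union>i\<in>{..<k}. {x\<in>V. f x = (i + s) mod ?q})"
      then obtain i where i: "i < k" "x \<in> V" "f x = (i + s) mod ?q" by auto
      have "(f x + (?q - s)) mod ?q = i" using modeq[OF fx[OF i(2)], of i s] i k s by simp
      then show "x \<in> {x\<in>V. rot V s f x < k}" using i unfolding rot_def by simp
    qed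
  qed
  have disj: "\<forall>i\<in>{..<k}. \<forall>j\<in>{..<k}. i \<noteq> j \<longrightarrow> {x\<in>V. f x = (i + s) mod ?q} \<inter> {x\<in>V. f x = (j + s) mod ?q} = {}"
  proof (intro ballI impI)
    fix i j assume ij: "i \<in> {..<k}" "j \<in> {..<k}" "i \<noteq> j"
    show "{x\<in>V. f x = (i + s) mod ?q} \<inter> {x\<in>V. f x = (j + s) mod ?q} = {}"
    proof (rule ccontr)
      assume "{x\<in>V. f x = (i + s) mod ?q} \<inter> {x\<in>V. f x = (j + s) mod ?q} \<noteq> {}"
      then obtain x where x: "x \<in> V" "f x = (i + s) mod ?q" "f x = (j + s) mod ?q" by blast
      have "(f x + (?q - s)) mod ?q = i" using modeq[OF fx[OF x(1)], of i s] x ij k s by simp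
      moreover have "(f x + (?q - s)) mod ?q = j" using modeq[OF fx[OF x(1)], of j s] x ij k s by simp
      ultimately show False using ij by simp
    qed
  qed
  have "card {x\<in>V. rot V s f x < k} = (\<Sum>i<k. card {x\<in>V. f x = (i + s) mod ?q})"
    unfolding eq by (rule card_UN_disjoint) (use fin disj in auto)
  then show ?thesis unfolding cnt_def by (simp add: add.commute)
qed

lemma rot_PF_iff:
  assumes fin: "finite V" and f: "f \<in> Fn V" and s: "s < Suc (card V)"
  shows "rot V s f \<in> PF V \<longleftrightarrow> cgood (Suc (card V)) (cnt V f) s"
proof -
  have out: "\<forall>x. x \<notin> V \<longrightarrow> rot V s f x = 0" unfolding rot_def by simp
  have "rot V s f \<in> PF V \<longleftrightarrow> (\<forall>k \<le> card V. k \<le> card {x\<in>V. rot V s f x < k})"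
    unfolding PF_def using out by simp
  also have "\<dots> \<longleftrightarrow> (\<forall>k < Suc (card V). k \<le> (\<Sum>i<k. cnt V f ((s + i) mod Suc (card V))))"
    using rot_count[OF fin f s] by (simp add: less_Suc_eq_le)
  finally show ?thesis unfolding cgood_def .
qed

lemma unique_rot:
  assumes fin: "finite V" and f: "f \<in> Fn V"
  shows "\<exists>!s. s < Suc (card V) \<and> rot V s f \<in> PF V"
proof -
  have "\<exists>!s. s < Suc (card V) \<and> cgood (Suc (card V)) (cnt V f) s"
    by (rule cycle_lemma) (use cnt_total[OF fin f] in auto)
  then show ?thesis using rot_PF_iff[OF fin f] by metis
qed

lemma rot_unrot:
  assumes fin: "finite V" and b: "b \<in> PF V" and s: "s < Suc (card V)"
  shows "rot V s (unrot V s b) = b"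
proof (intro ext)
  fix x
  show "rot V s (unrot V s b) x = b x"
  proof (cases "x \<in> V")
    case True
    have bx: "b x < Suc (card V)" using PF_lt[OF fin b True] by simp
    have "((b x + s) mod Suc (card V) + (Suc (card V) - s)) mod Suc (card V) = (b x + s + (Suc (card V) - s)) mod Suc (card V)"
      by (simp add: mod_add_left_eq)
    also have "\<dots> = (b x + Suc (card V)) mod Suc (card V)" using s by simp
    also have "\<dots> = b x" using bx by (metis mod_add_self2 mod_less)
    finally show ?thesis using True unfolding rot_def unrot_def by simp
  next
    case False
    then show ?thesis using PF_out[OF b False] unfolding rot_def by simp
  qed
qed

lemma unrot_rot:
  assumes f: "f \<in> Fn V" and s: "s < Suc (card V)"
  shows "unrot V s (rot V s f) = f"
proof (intro ext)
  fix x
  show "unrot V s (rot V s f) x = f x"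
  proof (cases "x \<in> V")
    case True
    have fx: "f x < Suc (card V)" using f True unfolding Fn_def by auto
    have "((f x + (Suc (card V) - s)) mod Suc (card V) + s) mod Suc (card V) = (f x + (Suc (card V) - s) + s) mod Suc (card V)"
      by (simp add: mod_add_left_eq)
    also have "\<dots> = (f x + Suc (card V)) mod Suc (card V)" using s by simp
    also have "\<dots> = f x" using fx by (metis mod_add_self2 mod_less)
    finally show ?thesis using True unfolding rot_def unrot_def by simp
  next
    case False
    then show ?thesis using f unfolding unrot_def Fn_def by simp
  qed
qed

lemma unrot_Fn: "unrot V s b \<in> Fn V"
  unfolding unrot_def Fn_def by auto

lemma card_Fn:
  assumes fin: "finite V"
  shows "card (Fn V) = Suc (card V) ^ card V"
proof -
  have "bij_betw (\<lambda>f. restrict f V) (Fn V) (PiE V (\<lambda>_. {..<Suc (card V)}))"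
  proof (rule bij_betw_byWitness[where f'="\<lambda>g x. if x \<in> V then g x else 0"])
    show "\<forall>a\<in>Fn V. (\<lambda>x. if x \<in> V then restrict a V x else 0) = a"
      unfolding Fn_def by (auto intro!: ext)
    show "\<forall>a'\<in>PiE V (\<lambda>_. {..<Suc (card V)}). restrict (\<lambda>x. if x \<in> V then a' x else 0) V = a'"
      by (auto intro!: ext simp: PiE_def extensional_def)
    show "(\<lambda>f. restrict f V) ` Fn V \<subseteq> PiE V (\<lambda>_. {..<Suc (card V)})"
      unfolding Fn_def by auto
    show "(\<lambda>g x. if x \<in> V then g x else 0) ` PiE V (\<lambda>_. {..<Suc (card V)}) \<subseteq> Fn V"
      unfolding Fn_def by (auto simp: PiE_def Pi_def)
  qed
  then have "card (Fn V) = card (PiE V (\<lambda>_. {..<Suc (card V)}))" by (rule bij_betw_same_card)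
  also have "\<dots> = Suc (card V) ^ card V" using card_PiE[OF fin, of "\<lambda>_. {..<Suc (card V)}"] by simp
  finally show ?thesis .
qed

lemma card_PF_mult:
  assumes fin: "finite V"
  shows "card (PF V) * Suc (card V) = Suc (card V) ^ card V"
proof -
  let ?q = "Suc (card V)"
  define sf where "sf = (\<lambda>f. THE s. s < ?q \<and> rot V s f \<in> PF V)"
  have sf: "\<And>f. f \<in> Fn V \<Longrightarrow> sf f < ?q \<and> rot V (sf f) f \<in> PF V"
    unfolding sf_def using unique_rot[OF fin] by (rule theI')
  have sfu: "\<And>f s. f \<in> Fn V \<Longrightarrow> s < ?q \<Longrightarrow> rot V s f \<in> PF V \<Longrightarrow> sf f = s"
  proof -
    fix f s assume h: "f \<in> Fn V" "s < ?q" "rot V s f \<in> PF V"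
    show "sf f = s" unfolding sf_def using the1_equality[OF unique_rot[OF fin h(1)]] h(2,3) by blast
  qed
  have "bij_betw (\<lambda>(b, s). unrot V s b) (PF V \<times> {..<?q}) (Fn V)"
  proof (rule bij_betw_byWitness[where f'="\<lambda>f. (rot V (sf f) f, sf f)"])
    show "\<forall>a\<in>PF V \<times> {..<?q}. (\<lambda>f. (rot V (sf f) f, sf f)) ((\<lambda>(b, s). unrot V s b) a) = a"
    proof
      fix a assume a: "a \<in> PF V \<times> {..<?q}"
      obtain b s where bs: "a = (b, s)" "b \<in> PF V" "s < ?q" using a by auto
      have r: "rot V s (unrot V s b) = b" using rot_unrot[OF fin bs(2,3)] .
      have "sf (unrot V s b) = s" using sfu[OF unrot_Fn bs(3)] r bs(2) by simp
      then show "(\<lambda>f. (rot V (sf f) f, sf f)) ((\<lambda>(b, s). unrot V s b) a) = a" using bs r by simp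
    qed
    show "\<forall>a'\<in>Fn V. (\<lambda>(b, s). unrot V s b) ((\<lambda>f. (rot V (sf f) f, sf f)) a') = a'"
      using sf unrot_rot by auto
    show "(\<lambda>(b, s). unrot V s b) ` (PF V \<times> {..<?q}) \<subseteq> Fn V" using unrot_Fn by auto
    show "(\<lambda>f. (rot V (sf f) f, sf f)) ` Fn V \<subseteq> PF V \<times> {..<?q}" using sf by auto
  qed
  then have "card (PF V \<times> {..<?q}) = card (Fn V)" by (rule bij_betw_same_card)
  then show ?thesis using card_Fn[OF fin] by (simp add: card_cartesian_product)
qed

lemma card_PF:
  assumes fin: "finite V" and ne: "card V \<ge> 1"
  shows "card (PF V) = Suc (card V) ^ (card V - 1)"
proof -
  have "card (PF V) * Suc (card V) = Suc (card V) ^ (card V - 1) * Suc (card V)"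
    using card_PF_mult[OF fin] ne by (metis Suc_diff_le diff_Suc_1 mult.commute power_Suc)
  moreover have "Suc (card V) \<noteq> 0" by simp
  ultimately show ?thesis using mult_right_cancel by blast
qed


lemma ea_eq: "edge_assignments n = ea {1..n}"
  unfolding edge_assignments_def ea_def by auto

lemma acyclic_iff_tt: "acyclic (arc_rel n P) \<longleftrightarrow> tt {1..n} P"
proof
  assume ac: "acyclic (arc_rel n P)"
  show "tt {1..n} P" unfolding tt_def
  proof (intro ballI impI)
    fix x y z assume V: "x \<in> {1..n}" "y \<in> {1..n}" "z \<in> {1..n}" and a: "arc P x y \<and> arc P y z"
    show "arc P x z"
    proof (rule ccontr)
      assume na: "\<not> arc P x z"
      have xz: "x \<noteq> z" using a arc_asym by blast
      have azx: "arc P z x" using arc_total[OF xz] na by blast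
      have xy: "x \<noteq> y" and yz: "y \<noteq> z" using a arc_irrefl by metis+
      have zx: "z \<noteq> x" using xz by simp
      have r1: "(x, y) \<in> arc_rel n P" unfolding arc_rel_def using V a xy by simp
      have r2: "(y, z) \<in> arc_rel n P" unfolding arc_rel_def using V a yz by simp
      have r3: "(z, x) \<in> arc_rel n P" unfolding arc_rel_def using V azx zx by simp
      have "(x, x) \<in> (arc_rel n P)\<^sup>+" using r1 r2 r3 by (meson trancl.simps)
      then show False using ac unfolding acyclic_def by blast
    qed
  qed
next
  assume tt: "tt {1..n} P"
  have tr: "trans (arc_rel n P)"
  proof (rule transI)
    fix x y z assume "(x, y) \<in> arc_rel n P" "(y, z) \<in> arc_rel n P"
    then have h: "x \<in> {1..n}" "y \<in> {1..n}" "z \<in> {1..n}" "arc P x y" "arc P y z"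
      unfolding arc_rel_def by auto
    then have axz: "arc P x z" using tt unfolding tt_def by blast
    then have "x \<noteq> z" using arc_irrefl by metis
    then show "(x, z) \<in> arc_rel n P" unfolding arc_rel_def using h axz by simp
  qed
  show "acyclic (arc_rel n P)" unfolding acyclic_def trancl_id[OF tr]
    unfolding arc_rel_def by auto
qed

lemma tri_iff:
  assumes tt: "tt V P"
  shows "(\<forall>s\<in>V. \<forall>m\<in>V. \<forall>t\<in>V.
        s \<noteq> m \<and> m \<noteq> t \<and> s \<noteq> t \<and> arc P s m \<and> arc P m t \<and> arc P s t \<and>
        Down \<in> {etp P s m, etp P m t, etp P s t} \<and>
        Downish \<in> {etp P s m, etp P m t, etp P s t}
        \<longrightarrow> etp P s t \<noteq> Downish) \<longleftrightarrow> tri V P"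
proof
  assume H: "\<forall>s\<in>V. \<forall>m\<in>V. \<forall>t\<in>V.
        s \<noteq> m \<and> m \<noteq> t \<and> s \<noteq> t \<and> arc P s m \<and> arc P m t \<and> arc P s t \<and>
        Down \<in> {etp P s m, etp P m t, etp P s t} \<and>
        Downish \<in> {etp P s m, etp P m t, etp P s t}
        \<longrightarrow> etp P s t \<noteq> Downish"
  show "tri V P" unfolding tri_def
  proof (intro ballI impI)
    fix s m t assume V: "s \<in> V" "m \<in> V" "t \<in> V" and a: "arc P s m \<and> arc P m t \<and> etp P s t = Downish"
    have d: "s \<noteq> m" "m \<noteq> t" using a arc_irrefl by metis+
    have d2: "s \<noteq> t" using a arc_asym by metis
    have ast: "arc P s t" using tt V a unfolding tt_def by blast
    show "etp P s m \<noteq> Down \<and> etp P m t \<noteq> Down"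
    proof (rule ccontr)
      assume "\<not> (etp P s m \<noteq> Down \<and> etp P m t \<noteq> Down)"
      then have "Down \<in> {etp P s m, etp P m t, etp P s t}" by auto
      moreover have "Downish \<in> {etp P s m, etp P m t, etp P s t}" using a by simp
      ultimately have "etp P s t \<noteq> Downish" using H V d d2 a ast by blast
      then show False using a by simp
    qed
  qed
next
  assume T: "tri V P"
  show "\<forall>s\<in>V. \<forall>m\<in>V. \<forall>t\<in>V.
        s \<noteq> m \<and> m \<noteq> t \<and> s \<noteq> t \<and> arc P s m \<and> arc P m t \<and> arc P s t \<and>
        Down \<in> {etp P s m, etp P m t, etp P s t} \<and>
        Downish \<in> {etp P s m, etp P m t, etp P s t}
        \<longrightarrow> etp P s t \<noteq> Downish"
  proof (intro ballI impI)
    fix s m t assume V: "s \<in> V" "m \<in> V" "t \<in> V"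
      and h: "s \<noteq> m \<and> m \<noteq> t \<and> s \<noteq> t \<and> arc P s m \<and> arc P m t \<and> arc P s t \<and>
        Down \<in> {etp P s m, etp P m t, etp P s t} \<and>
        Downish \<in> {etp P s m, etp P m t, etp P s t}"
    show "etp P s t \<noteq> Downish"
    proof
      assume W: "etp P s t = Downish"
      then have "etp P s m \<noteq> Down \<and> etp P m t \<noteq> Down"
        using T[unfolded tri_def, rule_format, of s m t] V h by simp
      then show False using h W by auto
    qed
  qed
qed

lemma parking_graphs_eq: "parking_graphs n = PG {1..n}"
proof -
  have "\<And>P. source_sink n P \<longleftrightarrow> tt {1..n} P \<and> tri {1..n} P"
  proof -
    fix P
    show "source_sink n P \<longleftrightarrow> tt {1..n} P \<and> tri {1..n} P"
    proof
      assume "source_sink n P"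
      then have a: "acyclic (arc_rel n P)" and b: "\<forall>s\<in>{1..n}. \<forall>m\<in>{1..n}. \<forall>t\<in>{1..n}.
        s \<noteq> m \<and> m \<noteq> t \<and> s \<noteq> t \<and> arc P s m \<and> arc P m t \<and> arc P s t \<and>
        Down \<in> {etp P s m, etp P m t, etp P s t} \<and>
        Downish \<in> {etp P s m, etp P m t, etp P s t}
        \<longrightarrow> etp P s t \<noteq> Downish" unfolding source_sink_def by auto
      have "tt {1..n} P" using a acyclic_iff_tt by blast
      moreover have "tri {1..n} P" using b tri_iff[OF \<open>tt {1..n} P\<close>] by blast
      ultimately show "tt {1..n} P \<and> tri {1..n} P" by simp
    next
      assume h: "tt {1..n} P \<and> tri {1..n} P"
      then have "acyclic (arc_rel n P)" using acyclic_iff_tt by blast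
      moreover have "\<forall>s\<in>{1..n}. \<forall>m\<in>{1..n}. \<forall>t\<in>{1..n}.
        s \<noteq> m \<and> m \<noteq> t \<and> s \<noteq> t \<and> arc P s m \<and> arc P m t \<and> arc P s t \<and>
        Down \<in> {etp P s m, etp P m t, etp P s t} \<and>
        Downish \<in> {etp P s m, etp P m t, etp P s t}
        \<longrightarrow> etp P s t \<noteq> Downish" using h tri_iff[of "{1..n}" P] by blast
      ultimately show "source_sink n P" unfolding source_sink_def by blast
    qed
  qed
  then show ?thesis unfolding parking_graphs_def PG_def ea_eq by auto
qed

theorem theorem1p4:
  fixes n :: nat
  assumes "n \<ge> 1"
  shows "card (parking_graphs n) = (n + 1) ^ (n - 1)"
proof -
  have fin: "finite {1..n}" by simp
  have c: "card {1..n} = n" by simp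
  have "card (parking_graphs n) = card (PG {1..n})" using parking_graphs_eq by simp
  also have "\<dots> = card (PF {1..n})" using card_PG_PF[OF fin] .
  also have "\<dots> = Suc n ^ (n - 1)" using card_PF[OF fin] c assms by simp
  finally show ?thesis by simp
qed

end
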